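(* Let $X=X(s)$ be a strictly convex $C^{(3)}$ curve in the plane $\mathbb{R}^2$, parametrized by arclength. The following are equivalent: (1) there are functions $\lambda(s)$ and $\mu(s)$ such that for all $s$ and all sufficiently small $h_1,h_2$ (with $X(s),X(s+h_1),X(s+h_2)$ distinct), $U(s,h_1,h_2)=\lambda(s)\,T(s,h_1,h_2)^{\mu(s)}$; (2) for all $s$ and all sufficiently small $h_1,h_2$ (with the three points distinct), $U(s,h_1,h_2)=\frac12 T(s,h_1,h_2)$; (3) $X$ is an open part of a parabola.
   Context: A regular plane curve $X$ defined on an open interval is convex if for every point of $X$ the trace of $X$ lies entirely in one closed half-plane determined by the tangent line at that point. A simple convex curve $X$ is strictly convex if it is of class $C^{(3)}$ and has positive curvature with respect to the unit normal pointing to the convex side. For three distinct points $A=X(s)$, $A_i=X(s+h_i)$ ($i=1,2$) on $X$, let $\ell,\ell_1,\ell_2$ be the tangent lines of $X$ at $A,A_1,A_2$, and let $B=\ell_1\cap\ell_2$, $B_1=\ell\cap\ell_1$, $B_2=\ell\cap\ell_2$. Define $T(s,h_1,h_2)=|\triangle AA_1A_2|$ and $U(s,h_1,h_2)=|\triangle BB_1B_2|$ (areas). *)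

theory Defs
  imports "HOL-Analysis.Analysis"
begin

text \<open>The plane is modelled as the complex numbers.\<close>

definition cross2 :: "complex \<Rightarrow> complex \<Rightarrow> real" where
  "cross2 u v = Re u * Im v - Im u * Re v"

definition tri_area :: "complex \<Rightarrow> complex \<Rightarrow> complex \<Rightarrow> real" where
  "tri_area A B C = \<bar>cross2 (B - A) (C - A)\<bar> / 2"

text \<open>Intersection point of the lines P + a d and Q + b e (meaningful when not parallel).\<close>
definition line_inter :: "complex \<Rightarrow> complex \<Rightarrow> complex \<Rightarrow> complex \<Rightarrow> complex" where
  "line_inter P d Q e = P + of_real (cross2 (Q - P) e / cross2 d e) * d"

definition open_interval :: "real set \<Rightarrow> bool" where
  "open_interval I \<longleftrightarrow> is_interval I \<and> open I \<and> I \<noteq> {}"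

definition C3_on :: "real set \<Rightarrow> (real \<Rightarrow> complex) \<Rightarrow> bool" where
  "C3_on I X \<longleftrightarrow> (\<exists>X1 X2 X3.
      (\<forall>t\<in>I. (X has_vector_derivative X1 t) (at t)) \<and>
      (\<forall>t\<in>I. (X1 has_vector_derivative X2 t) (at t)) \<and>
      (\<forall>t\<in>I. (X2 has_vector_derivative X3 t) (at t)) \<and>
      continuous_on I X3)"

definition arclength_param :: "real set \<Rightarrow> (real \<Rightarrow> complex) \<Rightarrow> bool" where
  "arclength_param I X \<longleftrightarrow> (\<forall>t\<in>I. X differentiable (at t) \<and> norm (vector_derivative X (at t)) = 1)"

text \<open>Simple, convex, C^3, with positive curvature w.r.t. the unit normal pointing to the
  convex side. If the trace lies on the left of the tangent (cross2 \<ge> 0) this normal is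
  \<i> X', and the curvature is X''\<cdot>(\<i> X') = cross2 X' X''; symmetrically on the right.\<close>
definition strictly_convex_curve :: "real set \<Rightarrow> (real \<Rightarrow> complex) \<Rightarrow> bool" where
  "strictly_convex_curve I X \<longleftrightarrow> open_interval I \<and> C3_on I X \<and> inj_on X I \<and>
     (\<forall>t\<in>I. let d1 = vector_derivative X (at t);
                 d2 = vector_derivative (\<lambda>u. vector_derivative X (at u)) (at t) in
        d1 \<noteq> 0 \<and>
        (((\<forall>u\<in>I. cross2 d1 (X u - X t) \<ge> 0) \<and> cross2 d1 d2 > 0) \<or>
         ((\<forall>u\<in>I. cross2 d1 (X u - X t) \<le> 0) \<and> cross2 d1 d2 < 0)))"

definition T_area :: "(real \<Rightarrow> complex) \<Rightarrow> real \<Rightarrow> real \<Rightarrow> real \<Rightarrow> real" where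
  "T_area X s h1 h2 = tri_area (X s) (X (s + h1)) (X (s + h2))"

definition U_area :: "(real \<Rightarrow> complex) \<Rightarrow> real \<Rightarrow> real \<Rightarrow> real \<Rightarrow> real" where
  "U_area X s h1 h2 =
     (let A = X s; A1 = X (s + h1); A2 = X (s + h2);
          d = vector_derivative X (at s);
          d1 = vector_derivative X (at (s + h1));
          d2 = vector_derivative X (at (s + h2));
          B = line_inter A1 d1 A2 d2;
          B1 = line_inter A d A1 d1;
          B2 = line_inter A d A2 d2
      in tri_area B B1 B2)"

text \<open>Parabolas: rigid images of y = c x^2, c \<noteq> 0.\<close>
definition parabola :: "complex set \<Rightarrow> bool" where
  "parabola P \<longleftrightarrow> (\<exists>a u c. norm u = 1 \<and> c \<noteq> 0 \<and>
      P = range (\<lambda>t::real. a + of_real t * u + of_real (c * t\<^sup>2) * \<i> * u))"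

definition small_prop :: "real set \<Rightarrow> (real \<Rightarrow> complex) \<Rightarrow> (real \<Rightarrow> real \<Rightarrow> real \<Rightarrow> bool) \<Rightarrow> bool" where
  "small_prop I X Q \<longleftrightarrow> (\<forall>s\<in>I. \<exists>\<delta>>0. \<forall>h1 h2. \<bar>h1\<bar> < \<delta> \<and> \<bar>h2\<bar> < \<delta> \<and>
       s + h1 \<in> I \<and> s + h2 \<in> I \<and>
       X s \<noteq> X (s + h1) \<and> X s \<noteq> X (s + h2) \<and> X (s + h1) \<noteq> X (s + h2) \<longrightarrow> Q s h1 h2)"

end

theory Submission
  imports Defs "HOL-Computational_Algebra.Polynomial"
begin


definition dotc :: "complex \<Rightarrow> complex \<Rightarrow> real" where
  "dotc u v = Re u * Re v + Im u * Im v"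

lemma cross2_self[simp]: "cross2 u u = 0" by (simp add: cross2_def)
lemma cross2_anti: "cross2 u v = - cross2 v u" by (simp add: cross2_def)
lemma cross2_add_right: "cross2 u (v + w) = cross2 u v + cross2 u w" by (simp add: cross2_def algebra_simps)
lemma cross2_diff_right: "cross2 u (v - w) = cross2 u v - cross2 u w" by (simp add: cross2_def algebra_simps)
lemma cross2_add_left: "cross2 (v + w) u = cross2 v u + cross2 w u" by (simp add: cross2_def algebra_simps)
lemma cross2_diff_left: "cross2 (v - w) u = cross2 v u - cross2 w u" by (simp add: cross2_def algebra_simps)
lemma cross2_scale_right: "cross2 u (of_real r * v) = r * cross2 u v" by (simp add: cross2_def algebra_simps)
lemma cross2_scale_left: "cross2 (of_real r * v) u = r * cross2 v u" by (simp add: cross2_def algebra_simps)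

lemma norm1_sq: "norm d = 1 \<Longrightarrow> (Re d)^2 + (Im d)^2 = 1"
  by (metis cmod_power2 one_power2)

lemma dotc_self: "norm d = 1 \<Longrightarrow> dotc d d = 1"
  using norm1_sq[of d] by (simp add: dotc_def power2_eq_square)

lemma cross2_frame: "norm d = 1 \<Longrightarrow>
   cross2 z w = dotc d z * cross2 d w - cross2 d z * dotc d w"
proof -
  assume "norm d = 1"
  then have h: "(Re d)^2 + (Im d)^2 = 1" by (rule norm1_sq)
  have "dotc d z * cross2 d w - cross2 d z * dotc d w = ((Re d)^2 + (Im d)^2) * cross2 z w"
    by (simp add: dotc_def cross2_def power2_eq_square algebra_simps)
  then show ?thesis using h by simp
qed

lemma tendsto_cross2[tendsto_intros]:
  "(f \<longlongrightarrow> a) F \<Longrightarrow> (g \<longlongrightarrow> b) F \<Longrightarrow> ((\<lambda>x. cross2 (f x) (g x)) \<longlongrightarrow> cross2 a b) F"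
  unfolding cross2_def by (intro tendsto_intros)

lemma tendsto_dotc[tendsto_intros]:
  "(f \<longlongrightarrow> a) F \<Longrightarrow> (g \<longlongrightarrow> b) F \<Longrightarrow> ((\<lambda>x. dotc (f x) (g x)) \<longlongrightarrow> dotc a b) F"
  unfolding dotc_def by (intro tendsto_intros)

lemma vd_Re: "(Y has_vector_derivative D) (at t) \<Longrightarrow> ((\<lambda>u. Re (Y u)) has_real_derivative Re D) (at t)"
  unfolding has_real_derivative_iff_has_vector_derivative
  by (rule bounded_linear.has_vector_derivative[OF bounded_linear_Re])

lemma vd_Im: "(Y has_vector_derivative D) (at t) \<Longrightarrow> ((\<lambda>u. Im (Y u)) has_real_derivative Im D) (at t)"
  unfolding has_real_derivative_iff_has_vector_derivative
  by (rule bounded_linear.has_vector_derivative[OF bounded_linear_Im])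

lemma deriv_cross2:
  assumes "(Y has_vector_derivative D) (at t)"
  shows "((\<lambda>u. cross2 w (Y u - c)) has_real_derivative cross2 w D) (at t)"
proof -
  have "((\<lambda>u. Re w * (Im (Y u) - Im c) - Im w * (Re (Y u) - Re c)) has_real_derivative
        Re w * (Im D - 0) - Im w * (Re D - 0)) (at t)"
    by (intro DERIV_diff DERIV_add DERIV_cmult DERIV_const vd_Re[OF assms] vd_Im[OF assms])
  then show ?thesis by (simp add: cross2_def)
qed

lemma deriv_cross2':
  assumes "(Y has_vector_derivative D) (at t)"
  shows "((\<lambda>u. cross2 w (Y u)) has_real_derivative cross2 w D) (at t)"
  using deriv_cross2[OF assms, of w 0] by simp

lemma deriv_dotc:
  assumes "(Y has_vector_derivative D) (at t)"
  shows "((\<lambda>u. dotc w (Y u - c)) has_real_derivative dotc w D) (at t)"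
proof -
  have "((\<lambda>u. Re w * (Re (Y u) - Re c) + Im w * (Im (Y u) - Im c)) has_real_derivative
        Re w * (Re D - 0) + Im w * (Im D - 0)) (at t)"
    by (intro DERIV_diff DERIV_add DERIV_cmult DERIV_const vd_Re[OF assms] vd_Im[OF assms])
  then show ?thesis by (simp add: dotc_def)
qed

lemma deriv_dotc':
  assumes "(Y has_vector_derivative D) (at t)"
  shows "((\<lambda>u. dotc w (Y u)) has_real_derivative dotc w D) (at t)"
  using deriv_dotc[OF assms, of w 0] by simp

lemma line_inter_sym:
  assumes "cross2 d e \<noteq> 0"
  shows "line_inter P d Q e = line_inter Q e P d"
proof -
  have "cross2 e d \<noteq> 0" using assms cross2_anti[of d e] by auto
  show ?thesis using assms \<open>cross2 e d \<noteq> 0\<close>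
    unfolding line_inter_def
    by (simp add: complex_eq_iff cross2_def field_simps)
qed


locale scurve =
  fixes I :: "real set" and X X1 X2 X3 :: "real \<Rightarrow> complex"
  assumes openI: "open I" and intI: "is_interval I"
  and D1: "\<And>t. t \<in> I \<Longrightarrow> (X has_vector_derivative X1 t) (at t)"
  and D2: "\<And>t. t \<in> I \<Longrightarrow> (X1 has_vector_derivative X2 t) (at t)"
  and D3: "\<And>t. t \<in> I \<Longrightarrow> (X2 has_vector_derivative X3 t) (at t)"
  and C3: "continuous_on I X3"
  and unit: "\<And>t. t \<in> I \<Longrightarrow> norm (X1 t) = 1"
  and inj: "inj_on X I"
  and conv: "\<And>t u. t \<in> I \<Longrightarrow> u \<in> I \<Longrightarrow> cross2 (X1 t) (X u - X t) * cross2 (X1 t) (X2 t) \<ge> 0"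
  and kne: "\<And>t. t \<in> I \<Longrightarrow> cross2 (X1 t) (X2 t) \<noteq> 0"
begin

definition "k s0 = cross2 (X1 s0) (X2 s0)"
definition "Pf s0 u = cross2 (X1 s0) (X u - X s0)"
definition "Qf s0 u = dotc (X1 s0) (X u - X s0)"
definition "P1 s0 u = cross2 (X1 s0) (X1 u)"
definition "Q1 s0 u = dotc (X1 s0) (X1 u)"
definition "P2 s0 u = cross2 (X1 s0) (X2 u)"
definition "Q2 s0 u = dotc (X1 s0) (X2 u)"
definition "P3 s0 u = cross2 (X1 s0) (X3 u)"
definition "Q3 s0 u = dotc (X1 s0) (X3 u)"

lemma dPf: "u \<in> I \<Longrightarrow> DERIV (Pf s0) u :> P1 s0 u"
  unfolding Pf_def P1_def by (rule deriv_cross2[OF D1])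
lemma dQf: "u \<in> I \<Longrightarrow> DERIV (Qf s0) u :> Q1 s0 u"
  unfolding Qf_def Q1_def by (rule deriv_dotc[OF D1])
lemma dP1: "u \<in> I \<Longrightarrow> DERIV (P1 s0) u :> P2 s0 u"
  unfolding P2_def P1_def by (rule deriv_cross2'[OF D2])
lemma dQ1: "u \<in> I \<Longrightarrow> DERIV (Q1 s0) u :> Q2 s0 u"
  unfolding Q2_def Q1_def by (rule deriv_dotc'[OF D2])
lemma dP2: "u \<in> I \<Longrightarrow> DERIV (P2 s0) u :> P3 s0 u"
  unfolding P2_def P3_def by (rule deriv_cross2'[OF D3])
lemma dQ2: "u \<in> I \<Longrightarrow> DERIV (Q2 s0) u :> Q3 s0 u"
  unfolding Q2_def Q3_def by (rule deriv_dotc'[OF D3])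

lemma contX: "t \<in> I \<Longrightarrow> isCont X t"
  using D1 has_vector_derivative_continuous by blast
lemma contX1: "t \<in> I \<Longrightarrow> isCont X1 t"
  using D2 has_vector_derivative_continuous by blast
lemma contX2: "t \<in> I \<Longrightarrow> isCont X2 t"
  using D3 has_vector_derivative_continuous by blast
lemma contX3: "t \<in> I \<Longrightarrow> isCont X3 t"
  using C3 openI continuous_on_eq_continuous_at by blast

lemma vdX: "t \<in> I \<Longrightarrow> vector_derivative X (at t) = X1 t"
  using D1 vector_derivative_at by blast

lemma vdX2: "t \<in> I \<Longrightarrow> vector_derivative (\<lambda>u. vector_derivative X (at u)) (at t) = X2 t"
proof -
  assume t: "t \<in> I"
  have "((\<lambda>u. vector_derivative X (at u)) has_vector_derivative X2 t) (at t)"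
    by (rule has_vector_derivative_transform_within_open[OF D2[OF t] openI t]) (simp add: vdX)
  then show ?thesis by (rule vector_derivative_at)
qed

lemma Pf0[simp]: "Pf s0 s0 = 0" and Qf0[simp]: "Qf s0 s0 = 0"
  by (simp_all add: Pf_def Qf_def dotc_def cross2_def)
lemma P10[simp]: "P1 s0 s0 = 0" by (simp add: P1_def)
lemma Q10: "s0 \<in> I \<Longrightarrow> Q1 s0 s0 = 1" by (simp add: Q1_def dotc_self unit)
lemma P20: "P2 s0 s0 = k s0" by (simp add: P2_def k_def)

lemma ev_I: "s0 \<in> I \<Longrightarrow> eventually (\<lambda>h. s0 + h \<in> I) (at 0)"
proof -
  assume "s0 \<in> I"
  have "((\<lambda>h. s0 + h) \<longlongrightarrow> s0 + 0) (at (0::real))" by (intro tendsto_intros)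
  then show ?thesis using topological_tendstoD[of "\<lambda>h. s0 + h" "s0" "at 0" I] openI \<open>s0 \<in> I\<close> by simp
qed

lemma ev_ne0: "eventually (\<lambda>h::real. h \<noteq> 0) (at 0)"
  by (simp add: eventually_at_filter)

lemma lim_cont: "t \<in> I \<Longrightarrow> isCont f t \<Longrightarrow> ((\<lambda>h. f (t + h)) \<longlongrightarrow> f t) (at 0)"
  by (simp add: isCont_iff)

lemma lim_Pf: "s0 \<in> I \<Longrightarrow> ((\<lambda>h. Pf s0 (s0 + h) / h) \<longlongrightarrow> 0) (at 0)"
  using dPf[of s0 s0] unfolding DERIV_def by simp
lemma lim_Qf: "s0 \<in> I \<Longrightarrow> ((\<lambda>h. Qf s0 (s0 + h) / h) \<longlongrightarrow> 1) (at 0)"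
  using dQf[of s0 s0] unfolding DERIV_def by (simp add: Q10)
lemma lim_P1: "s0 \<in> I \<Longrightarrow> ((\<lambda>h. P1 s0 (s0 + h) / h) \<longlongrightarrow> k s0) (at 0)"
  using dP1[of s0 s0] unfolding DERIV_def by (simp add: P20)
lemma lim_Q1: "s0 \<in> I \<Longrightarrow> ((\<lambda>h. Q1 s0 (s0 + h)) \<longlongrightarrow> 1) (at 0)"
proof -
  assume s0: "s0 \<in> I"
  have "isCont (Q1 s0) s0" using dQ1[OF s0] DERIV_isCont by blast
  then show ?thesis using lim_cont[OF s0] Q10[OF s0] by metis
qed

lemma lim_Pf2: "s0 \<in> I \<Longrightarrow> ((\<lambda>h. Pf s0 (s0 + h) / h^2) \<longlongrightarrow> k s0 / 2) (at 0)"
proof -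
  assume s0: "s0 \<in> I"
  have f0: "((\<lambda>h. Pf s0 (s0 + h)) \<longlongrightarrow> 0) (at 0)"
  proof -
    have "isCont (Pf s0) s0" using dPf[OF s0] DERIV_isCont by blast
    then show ?thesis using lim_cont[OF s0, of "Pf s0"] by simp
  qed
  have g0: "((\<lambda>h::real. h^2) \<longlongrightarrow> 0) (at 0)" by (intro tendsto_eq_intros) auto
  have "((\<lambda>h. (P1 s0 (s0 + h) / h) / 2) \<longlongrightarrow> k s0 / 2) (at 0)"
    by (intro tendsto_intros lim_P1[OF s0]) simp
  then have lim': "((\<lambda>h. P1 s0 (s0 + h) / (2 * h)) \<longlongrightarrow> k s0 / 2) (at 0)"
    by (simp add: field_simps)
  have evd: "eventually (\<lambda>h. DERIV (\<lambda>h. Pf s0 (s0 + h)) h :> P1 s0 (s0 + h)) (at 0)"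
    using ev_I[OF s0]
  proof (rule eventually_mono)
    fix h assume "s0 + h \<in> I"
    have "DERIV (\<lambda>h. s0 + h) h :> 1" by (intro derivative_eq_intros) auto
    from DERIV_chain2[OF dPf[OF \<open>s0 + h \<in> I\<close>] this] show "DERIV (\<lambda>h. Pf s0 (s0 + h)) h :> P1 s0 (s0 + h)" by simp
  qed
  have evg: "eventually (\<lambda>h::real. DERIV (\<lambda>h. h^2) h :> 2 * h) (at 0)"
    using DERIV_pow[of 2] by (intro always_eventually allI) simp
  show ?thesis
    by (rule lhopital[OF f0 g0 _ _ evd evg lim'])
      (use ev_ne0 in \<open>auto elim: eventually_mono\<close>)
qed


lemma frame: "s0 \<in> I \<Longrightarrow> cross2 z w = dotc (X1 s0) z * cross2 (X1 s0) w - cross2 (X1 s0) z * dotc (X1 s0) w"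
  using cross2_frame[OF unit] by blast

definition "bet s0 u = cross2 (X u - X s0) (X1 u) / cross2 (X1 s0) (X1 u)"

lemma tri_alg: "cross2 ((A + of_real \<beta> * d) - B) ((A + of_real \<sigma> * d) - B) = (\<sigma> - \<beta>) * cross2 d (B - A)"
  by (simp add: cross2_def algebra_simps)

lemma U_formula:
  assumes s0: "s0 \<in> I" and u: "u \<in> I" and h: "s0 + h \<in> I"
    and c1: "cross2 (X1 u) (X1 (s0 + h)) \<noteq> 0"
  shows "2 * U_area X s0 (u - s0) h =
    \<bar>(cross2 (X (s0 + h) - X s0) (X1 (s0 + h)) / P1 s0 (s0 + h) - bet s0 u) *
     (Pf s0 (s0 + h) + cross2 (X u - X (s0 + h)) (X1 u) / cross2 (X1 (s0 + h)) (X1 u) * P1 s0 (s0 + h))\<bar>"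
proof -
  let ?A = "X s0" and ?d = "X1 s0" and ?A2 = "X (s0+h)" and ?d2 = "X1 (s0+h)"
  let ?nu = "cross2 (X u - X (s0 + h)) (X1 u) / cross2 (X1 (s0 + h)) (X1 u)"
  have B: "line_inter (X u) (X1 u) ?A2 ?d2 = ?A2 + of_real ?nu * ?d2"
    using line_inter_sym[OF c1] by (simp add: line_inter_def)
  have B1: "line_inter ?A ?d (X u) (X1 u) = ?A + of_real (bet s0 u) * ?d"
    by (simp add: line_inter_def bet_def)
  have B2: "line_inter ?A ?d ?A2 ?d2 = ?A + of_real (cross2 (X (s0 + h) - X s0) (X1 (s0 + h)) / P1 s0 (s0 + h)) * ?d"
    by (simp add: line_inter_def P1_def)
  have e: "\<And>nu. cross2 ?d (?A2 + of_real nu * ?d2 - ?A) = Pf s0 (s0 + h) + nu * P1 s0 (s0 + h)"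
    by (simp add: Pf_def P1_def cross2_def algebra_simps)
  have su: "s0 + (u - s0) = u" by simp
  show ?thesis
    unfolding U_area_def Let_def su vdX[OF s0] vdX[OF u] vdX[OF h] B B1 B2 tri_area_def tri_alg e
    by simp
qed

lemma ev_P1: "s0 \<in> I \<Longrightarrow> eventually (\<lambda>h. P1 s0 (s0 + h) \<noteq> 0) (at 0)"
proof -
  assume s0: "s0 \<in> I"
  have "k s0 \<noteq> 0" using kne[OF s0] by (simp add: k_def)
  from tendsto_imp_eventually_ne[OF lim_P1[OF s0] this]
  have "eventually (\<lambda>h. P1 s0 (s0 + h) / h \<noteq> 0) (at 0)" .
  then show ?thesis by (rule eventually_mono) auto
qed

lemma lim_X: "s0 \<in> I \<Longrightarrow> ((\<lambda>h. X (s0 + h)) \<longlongrightarrow> X s0) (at 0)"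
  using lim_cont contX by blast
lemma lim_X1: "s0 \<in> I \<Longrightarrow> ((\<lambda>h. X1 (s0 + h)) \<longlongrightarrow> X1 s0) (at 0)"
  using lim_cont contX1 by blast
lemma lim_Qf0: "s0 \<in> I \<Longrightarrow> ((\<lambda>h. Qf s0 (s0 + h)) \<longlongrightarrow> 0) (at 0)"
proof -
  assume s0: "s0 \<in> I"
  have "isCont (Qf s0) s0" using dQf[OF s0] DERIV_isCont by blast
  then show ?thesis using lim_cont[OF s0, of "Qf s0"] by simp
qed

lemma sig_eq:
  assumes s0: "s0 \<in> I" and h: "h \<noteq> 0" and p: "P1 s0 (s0 + h) \<noteq> 0"
  shows "cross2 (X (s0 + h) - X s0) (X1 (s0 + h)) / P1 s0 (s0 + h) =
     Qf s0 (s0 + h) - (Pf s0 (s0 + h) / h) * Q1 s0 (s0 + h) / (P1 s0 (s0 + h) / h)"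
proof -
  have fr: "cross2 (X (s0+h) - X s0) (X1 (s0+h)) = Qf s0 (s0+h) * P1 s0 (s0+h) - Pf s0 (s0+h) * Q1 s0 (s0+h)"
    unfolding Qf_def Pf_def P1_def Q1_def by (rule frame[OF s0])
  show ?thesis unfolding fr using h p by (simp add: field_simps)
qed

lemma limU:
  assumes s0: "s0 \<in> I" and u: "u \<in> I" and p: "P1 s0 u \<noteq> 0"
  shows "((\<lambda>h. 2 * U_area X s0 (u - s0) h / \<bar>h\<bar>) \<longlongrightarrow> \<bar>k s0\<bar> * (bet s0 u)^2) (at 0)"
proof -
  let ?nu = "\<lambda>h. cross2 (X u - X (s0 + h)) (X1 u) / cross2 (X1 (s0 + h)) (X1 u)"
  let ?sig = "\<lambda>h. Qf s0 (s0 + h) - (Pf s0 (s0 + h) / h) * Q1 s0 (s0 + h) / (P1 s0 (s0 + h) / h)"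
  let ?F = "\<lambda>h. \<bar>(?sig h - bet s0 u) * (Pf s0 (s0 + h) / h + ?nu h * (P1 s0 (s0 + h) / h))\<bar>"
  have c: "((\<lambda>h. cross2 (X1 (s0 + h)) (X1 u)) \<longlongrightarrow> cross2 (X1 s0) (X1 u)) (at 0)"
    by (intro tendsto_intros lim_X1[OF s0])
  have cne: "cross2 (X1 s0) (X1 u) \<noteq> 0" using p by (simp add: P1_def)
  have ev1: "eventually (\<lambda>h. cross2 (X1 (s0 + h)) (X1 u) \<noteq> 0) (at 0)"
    using tendsto_imp_eventually_ne[OF c cne] .
  have "((\<lambda>h. ?F h) \<longlongrightarrow> \<bar>(0 - 0 * 1 / k s0 - bet s0 u) * (0 + bet s0 u * k s0)\<bar>) (at 0)"
    unfolding bet_def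
    by (intro tendsto_intros lim_Qf0[OF s0] lim_Pf[OF s0] lim_Q1[OF s0] lim_P1[OF s0] lim_X[OF s0] lim_X1[OF s0] cne)
       (use kne[OF s0] in \<open>simp_all add: k_def\<close>)
  moreover have eqv: "\<bar>(0 - 0 * 1 / k s0 - bet s0 u) * (0 + bet s0 u * k s0)\<bar> = \<bar>k s0\<bar> * (bet s0 u)^2"
    by (simp add: abs_mult power2_eq_square)
  ultimately have lim: "((\<lambda>h. ?F h) \<longlongrightarrow> \<bar>k s0\<bar> * (bet s0 u)^2) (at 0)"
    by metis
  show ?thesis
  proof (rule Lim_transform_eventually[OF lim])
    show "\<forall>\<^sub>F h in at 0. ?F h = 2 * U_area X s0 (u - s0) h / \<bar>h\<bar>"
      using ev_I[OF s0] ev_ne0 ev_P1[OF s0] ev1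
    proof eventually_elim
      case (elim h)
      have c1: "cross2 (X1 u) (X1 (s0 + h)) \<noteq> 0" using elim(4) cross2_anti by (metis neg_equal_0_iff_equal)
      have "2 * U_area X s0 (u - s0) h / \<bar>h\<bar> =
        \<bar>(?sig h - bet s0 u) * (Pf s0 (s0 + h) + ?nu h * P1 s0 (s0 + h))\<bar> / \<bar>h\<bar>"
        using U_formula[OF s0 u elim(1) c1] sig_eq[OF s0 elim(2) elim(3)] by simp
      also have "\<dots> = ?F h"
      proof -
        have "Pf s0 (s0 + h) / h + ?nu h * (P1 s0 (s0 + h) / h) = (Pf s0 (s0 + h) + ?nu h * P1 s0 (s0 + h)) / h"
          by (simp add: add_divide_distrib)
        then show ?thesis by (simp only: abs_mult abs_divide) simp
      qed
      finally show ?case by simp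
    qed
  qed
qed

lemma limT:
  assumes s0: "s0 \<in> I"
  shows "((\<lambda>h. 2 * T_area X s0 (u - s0) h / \<bar>h\<bar>) \<longlongrightarrow> \<bar>Pf s0 u\<bar>) (at 0)"
proof -
  let ?F = "\<lambda>h. \<bar>Qf s0 u * (Pf s0 (s0 + h) / h) - Pf s0 u * (Qf s0 (s0 + h) / h)\<bar>"
  have "(?F \<longlongrightarrow> \<bar>Qf s0 u * 0 - Pf s0 u * 1\<bar>) (at 0)"
    by (intro tendsto_intros lim_Pf[OF s0] lim_Qf[OF s0])
  then have lim: "(?F \<longlongrightarrow> \<bar>Pf s0 u\<bar>) (at 0)" by simp
  show ?thesis
  proof (rule Lim_transform_eventually[OF lim])
    show "\<forall>\<^sub>F h in at 0. ?F h = 2 * T_area X s0 (u - s0) h / \<bar>h\<bar>"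
      using ev_ne0
    proof eventually_elim
      case (elim h)
      have "cross2 (X u - X s0) (X (s0 + h) - X s0) = Qf s0 u * Pf s0 (s0 + h) - Pf s0 u * Qf s0 (s0 + h)"
        unfolding Qf_def Pf_def by (rule frame[OF s0])
      moreover have "2 * T_area X s0 (u - s0) h / \<bar>h\<bar> = \<bar>cross2 (X u - X s0) (X (s0 + h) - X s0) / h\<bar>"
        by (simp add: T_area_def tri_area_def abs_divide)
      ultimately show ?case by (simp add: diff_divide_distrib)
    qed
  qed
qed

lemma lim_bet: "s0 \<in> I \<Longrightarrow> ((\<lambda>h. bet s0 (s0 + h) / h) \<longlongrightarrow> 1/2) (at 0)"
proof -
  assume s0: "s0 \<in> I"
  let ?F = "\<lambda>h. Qf s0 (s0 + h) / h - (Pf s0 (s0 + h) / h^2) * Q1 s0 (s0 + h) / (P1 s0 (s0 + h) / h)"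
  have "(?F \<longlongrightarrow> 1 - (k s0 / 2) * 1 / k s0) (at 0)"
    by (intro tendsto_intros lim_Qf[OF s0] lim_Pf2[OF s0] lim_Q1[OF s0] lim_P1[OF s0])
      (use kne[OF s0] in \<open>simp add: k_def\<close>)
  then have lim: "(?F \<longlongrightarrow> 1/2) (at 0)" using kne[OF s0] by (simp add: k_def)
  show ?thesis
  proof (rule Lim_transform_eventually[OF lim])
    show "\<forall>\<^sub>F h in at 0. ?F h = bet s0 (s0 + h) / h"
      using ev_ne0 ev_P1[OF s0]
    proof eventually_elim
      case (elim h)
      have "bet s0 (s0 + h) = (Qf s0 (s0 + h) * P1 s0 (s0 + h) - Pf s0 (s0 + h) * Q1 s0 (s0 + h)) / P1 s0 (s0 + h)"
        unfolding bet_def Qf_def Pf_def P1_def Q1_def by (subst frame[OF s0]) simp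
      then show ?case using elim by (simp add: field_simps power2_eq_square) (metis distrib_left)
    qed
  qed
qed

end


context scurve begin

lemma ev_eq:
  assumes s0: "s0 \<in> I" and u: "u \<in> I" "u \<noteq> s0" "\<bar>u - s0\<bar> < \<delta>"
    and H: "\<forall>h1 h2. \<bar>h1\<bar> < \<delta> \<and> \<bar>h2\<bar> < \<delta> \<and> s0 + h1 \<in> I \<and> s0 + h2 \<in> I \<and>
       X s0 \<noteq> X (s0 + h1) \<and> X s0 \<noteq> X (s0 + h2) \<and> X (s0 + h1) \<noteq> X (s0 + h2) \<longrightarrow> Q s0 h1 h2"
  shows "eventually (\<lambda>h. Q s0 (u - s0) h) (at 0)"
proof -
  have d: "\<delta> > 0" using u by linarith
  have e1: "eventually (\<lambda>h::real. \<bar>h\<bar> < \<delta>) (at 0)"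
    using d by (auto simp: eventually_at intro!: exI[of _ \<delta>])
  have e2: "eventually (\<lambda>h::real. h \<noteq> u - s0) (at 0)"
  proof -
    have "((\<lambda>h::real. h) \<longlongrightarrow> 0) (at 0)" by (rule tendsto_ident_at)
    from tendsto_imp_eventually_ne[OF this, of "u - s0"] u(2) show ?thesis by simp
  qed
  show ?thesis
    using e1 e2 ev_I[OF s0] ev_ne0
  proof eventually_elim
    case (elim h)
    have "X s0 \<noteq> X u" using inj s0 u by (metis inj_onD)
    moreover have "X s0 \<noteq> X (s0 + h)" using inj s0 elim by (metis inj_onD add_cancel_left_right)
    moreover have "X u \<noteq> X (s0 + h)" using inj u elim by (metis inj_onD add_diff_cancel_left')
    ultimately show ?case using H[rule_format, of "u - s0" h] elim u by simp
  qed
qed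

lemma rel_half:
  assumes s0: "s0 \<in> I" and u: "u \<in> I" "u \<noteq> s0" "\<bar>u - s0\<bar> < \<delta>" and p: "P1 s0 u \<noteq> 0"
    and H: "\<forall>h1 h2. \<bar>h1\<bar> < \<delta> \<and> \<bar>h2\<bar> < \<delta> \<and> s0 + h1 \<in> I \<and> s0 + h2 \<in> I \<and>
       X s0 \<noteq> X (s0 + h1) \<and> X s0 \<noteq> X (s0 + h2) \<and> X (s0 + h1) \<noteq> X (s0 + h2) \<longrightarrow>
       U_area X s0 h1 h2 = T_area X s0 h1 h2 / 2"
  shows "2 * k s0 * (bet s0 u)^2 = Pf s0 u"
proof -
  have ev: "eventually (\<lambda>h. U_area X s0 (u - s0) h = T_area X s0 (u - s0) h / 2) (at 0)"
    using ev_eq[OF s0 u, of "\<lambda>s h1 h2. U_area X s h1 h2 = T_area X s h1 h2 / 2"] H by simp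
  have l1: "((\<lambda>h. 2 * U_area X s0 (u - s0) h / \<bar>h\<bar>) \<longlongrightarrow> \<bar>k s0\<bar> * (bet s0 u)^2) (at 0)"
    by (rule limU[OF s0 u(1) p])
  have "((\<lambda>h. (2 * T_area X s0 (u - s0) h / \<bar>h\<bar>) / 2) \<longlongrightarrow> \<bar>Pf s0 u\<bar> / 2) (at 0)"
    by (intro tendsto_intros limT[OF s0]) simp
  moreover have "eventually (\<lambda>h. (2 * T_area X s0 (u - s0) h / \<bar>h\<bar>) / 2 = 2 * U_area X s0 (u - s0) h / \<bar>h\<bar>) (at 0)"
    using ev by eventually_elim simp
  ultimately have l2: "((\<lambda>h. 2 * U_area X s0 (u - s0) h / \<bar>h\<bar>) \<longlongrightarrow> \<bar>Pf s0 u\<bar> / 2) (at 0)"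
    by (rule Lim_transform_eventually)
  have eq: "\<bar>k s0\<bar> * (bet s0 u)^2 = \<bar>Pf s0 u\<bar> / 2"
    using tendsto_unique[OF _ l1 l2] by simp
  have sg: "Pf s0 u * k s0 \<ge> 0" using conv[OF s0 u(1)] by (simp add: Pf_def k_def)
  have kn: "k s0 \<noteq> 0" using kne[OF s0] by (simp add: k_def)
  show ?thesis
  proof (cases "k s0 > 0")
    case True
    then have "Pf s0 u \<ge> 0" using sg by (simp add: zero_le_mult_iff)
    then show ?thesis using eq True by simp
  next
    case False
    then have "k s0 < 0" using kn by simp
    then have "Pf s0 u \<le> 0" using sg by (simp add: zero_le_mult_iff)
    then show ?thesis using eq \<open>k s0 < 0\<close> by simp
  qed
qed

lemma ev_good:
  assumes s0: "s0 \<in> I" and d: "\<delta> > 0"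
  shows "eventually (\<lambda>h. s0 + h \<in> I \<and> h \<noteq> 0 \<and> \<bar>h\<bar> < \<delta> \<and> P1 s0 (s0 + h) \<noteq> 0 \<and>
            Pf s0 (s0 + h) \<noteq> 0 \<and> bet s0 (s0 + h) \<noteq> 0) (at 0)"
proof -
  have kn: "k s0 \<noteq> 0" using kne[OF s0] by (simp add: k_def)
  have e1: "eventually (\<lambda>h::real. \<bar>h\<bar> < \<delta>) (at 0)"
    using d by (auto simp: eventually_at intro!: exI[of _ \<delta>])
  have e2: "eventually (\<lambda>h. Pf s0 (s0 + h) / h^2 \<noteq> 0) (at 0)"
    using tendsto_imp_eventually_ne[OF lim_Pf2[OF s0], of 0] kn by simp
  have e3: "eventually (\<lambda>h. bet s0 (s0 + h) / h \<noteq> 0) (at 0)"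
    using tendsto_imp_eventually_ne[OF lim_bet[OF s0], of 0] by simp
  show ?thesis using e1 e2 e3 ev_I[OF s0] ev_ne0 ev_P1[OF s0]
    by eventually_elim auto
qed

lemma local_rel:
  assumes s0: "s0 \<in> I" and d: "\<delta> > 0"
    and H: "\<forall>h1 h2. \<bar>h1\<bar> < \<delta> \<and> \<bar>h2\<bar> < \<delta> \<and> s0 + h1 \<in> I \<and> s0 + h2 \<in> I \<and>
       X s0 \<noteq> X (s0 + h1) \<and> X s0 \<noteq> X (s0 + h2) \<and> X (s0 + h1) \<noteq> X (s0 + h2) \<longrightarrow>
       U_area X s0 h1 h2 = T_area X s0 h1 h2 / 2"
  shows "\<exists>\<epsilon>>0. \<forall>u. 0 < \<bar>u - s0\<bar> \<and> \<bar>u - s0\<bar> < \<epsilon> \<longrightarrow> u \<in> I \<and> P1 s0 u \<noteq> 0 \<and> Pf s0 u \<noteq> 0 \<and>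
      bet s0 u \<noteq> 0 \<and> 2 * k s0 * (bet s0 u)^2 = Pf s0 u"
proof -
  obtain \<epsilon> where e: "\<epsilon> > 0" and E: "\<And>h. h \<noteq> 0 \<Longrightarrow> \<bar>h\<bar> < \<epsilon> \<Longrightarrow> s0 + h \<in> I \<and> h \<noteq> 0 \<and> \<bar>h\<bar> < \<delta> \<and> P1 s0 (s0 + h) \<noteq> 0 \<and>
            Pf s0 (s0 + h) \<noteq> 0 \<and> bet s0 (s0 + h) \<noteq> 0"
    using ev_good[OF s0 d] unfolding eventually_at by (auto simp: dist_real_def)
  show ?thesis
  proof (rule exI[of _ \<epsilon>], intro conjI[OF e] allI impI)
    fix u assume u: "0 < \<bar>u - s0\<bar> \<and> \<bar>u - s0\<bar> < \<epsilon>"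
    have G: "s0 + (u - s0) \<in> I \<and> \<bar>u - s0\<bar> < \<delta> \<and> P1 s0 (s0 + (u - s0)) \<noteq> 0 \<and>
            Pf s0 (s0 + (u - s0)) \<noteq> 0 \<and> bet s0 (s0 + (u - s0)) \<noteq> 0"
      using E[of "u - s0"] u by auto
    then have G': "u \<in> I" "\<bar>u - s0\<bar> < \<delta>" "P1 s0 u \<noteq> 0" "Pf s0 u \<noteq> 0" "bet s0 u \<noteq> 0" by auto
    have "u \<noteq> s0" using u by auto
    from rel_half[OF s0 G'(1) this G'(2) G'(3) H] G'
    show "u \<in> I \<and> P1 s0 u \<noteq> 0 \<and> Pf s0 u \<noteq> 0 \<and> bet s0 u \<noteq> 0 \<and> 2 * k s0 * (bet s0 u)^2 = Pf s0 u"
      by simp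
  qed
qed

end


context scurve begin

lemma powr_lim0: "e > 0 \<Longrightarrow> ((\<lambda>h::real. \<bar>h\<bar> powr e) \<longlongrightarrow> 0) (at 0)"
  by (rule tendsto_zero_powrI) (auto intro!: tendsto_eq_intros)

lemma lam_mu_u:
  assumes s0: "s0 \<in> I" and u: "u \<in> I" "u \<noteq> s0" "\<bar>u - s0\<bar> < \<delta>" and p: "P1 s0 u \<noteq> 0"
    and pf: "Pf s0 u \<noteq> 0" and bn: "bet s0 u \<noteq> 0"
    and H: "\<forall>h1 h2. \<bar>h1\<bar> < \<delta> \<and> \<bar>h2\<bar> < \<delta> \<and> s0 + h1 \<in> I \<and> s0 + h2 \<in> I \<and>
       X s0 \<noteq> X (s0 + h1) \<and> X s0 \<noteq> X (s0 + h2) \<and> X (s0 + h1) \<noteq> X (s0 + h2) \<longrightarrow>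
       U_area X s0 h1 h2 = lam * T_area X s0 h1 h2 powr mu"
  shows "mu = 1 \<and> lam = \<bar>k s0\<bar> * (bet s0 u)^2 / \<bar>Pf s0 u\<bar>"
proof -
  define a where "a h = 2 * U_area X s0 (u - s0) h / \<bar>h\<bar>" for h
  define b where "b h = 2 * T_area X s0 (u - s0) h / \<bar>h\<bar>" for h
  define A where "A = \<bar>k s0\<bar> * (bet s0 u)^2"
  define B where "B = \<bar>Pf s0 u\<bar>"
  have kn: "k s0 \<noteq> 0" using kne[OF s0] by (simp add: k_def)
  have A0: "A > 0" using kn bn by (simp add: A_def)
  have B0: "B > 0" using pf by (simp add: B_def)
  have la: "(a \<longlongrightarrow> A) (at 0)" unfolding a_def A_def by (rule limU[OF s0 u(1) p])
  have lb: "(b \<longlongrightarrow> B) (at 0)" unfolding b_def B_def by (rule limT[OF s0])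
  have ea: "eventually (\<lambda>h. a h > 0) (at 0)" using order_tendstoD(1)[OF la A0] .
  have eb: "eventually (\<lambda>h. b h > 0) (at 0)" using order_tendstoD(1)[OF lb B0] .
  have ev: "eventually (\<lambda>h. U_area X s0 (u - s0) h = lam * T_area X s0 (u - s0) h powr mu) (at 0)"
    using ev_eq[OF s0 u, of "\<lambda>s h1 h2. U_area X s h1 h2 = lam * T_area X s h1 h2 powr mu"] H by simp
  have key: "eventually (\<lambda>h. a h / 2 = lam * (b h / 2) powr mu * \<bar>h\<bar> powr (mu - 1) \<and> a h > 0 \<and> b h > 0) (at 0)"
    using ev ea eb ev_ne0
  proof eventually_elim
    case (elim h)
    have hp: "\<bar>h\<bar> > 0" using elim by simp
    have U: "U_area X s0 (u - s0) h = a h / 2 * \<bar>h\<bar>" using hp by (simp add: a_def)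
    have T: "T_area X s0 (u - s0) h = (b h / 2) * \<bar>h\<bar>" using hp by (simp add: b_def)
    have "a h / 2 * \<bar>h\<bar> = lam * ((b h / 2) powr mu * \<bar>h\<bar> powr mu)"
      using elim(1) unfolding U T powr_mult .
    also have "\<bar>h\<bar> powr mu = \<bar>h\<bar> powr (mu - 1) * \<bar>h\<bar>"
    proof -
      have "\<bar>h\<bar> powr mu = \<bar>h\<bar> powr ((mu - 1) + 1)" by simp
      also have "\<dots> = \<bar>h\<bar> powr (mu - 1) * \<bar>h\<bar> powr 1" by (rule powr_add)
      also have "\<dots> = \<bar>h\<bar> powr (mu - 1) * \<bar>h\<bar>" using hp by simp
      finally show ?thesis .
    qed
    finally have "a h / 2 * \<bar>h\<bar> = (lam * (b h / 2) powr mu * \<bar>h\<bar> powr (mu - 1)) * \<bar>h\<bar>"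
      by (simp only: mult.assoc)
    then have "a h / 2 = lam * (b h / 2) powr mu * \<bar>h\<bar> powr (mu - 1)"
      using hp by (subst (asm) mult_right_cancel) auto
    then show ?case using elim by blast
  qed
  have lamne: "lam \<noteq> 0"
  proof
    assume "lam = 0"
    have "eventually (\<lambda>h::real. False) (at 0)" using key by (rule eventually_mono) (use \<open>lam = 0\<close> in auto)
    then show False by simp
  qed
  have C: "((\<lambda>h. (a h / 2) / (lam * (b h / 2) powr mu)) \<longlongrightarrow> (A / 2) / (lam * (B / 2) powr mu)) (at 0)"
    using B0 lamne by (intro tendsto_intros la lb) auto
  have eC: "eventually (\<lambda>h. (a h / 2) / (lam * (b h / 2) powr mu) = \<bar>h\<bar> powr (mu - 1)) (at 0)"
    using key
  proof eventually_elim
    case (elim h)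
    have nz: "lam * (b h / 2) powr mu \<noteq> 0" using lamne elim by simp
    have eq: "a h / 2 = lam * (b h / 2) powr mu * \<bar>h\<bar> powr (mu - 1)" using elim by blast
    show ?case unfolding eq by (rule nonzero_mult_div_cancel_left[OF nz])
  qed
  have Cne: "(A / 2) / (lam * (B / 2) powr mu) \<noteq> 0" using A0 B0 lamne by simp
  have mu1: "mu = 1"
  proof (rule ccontr)
    assume "mu \<noteq> 1"
    then consider "mu > 1" | "mu < 1" by linarith
    then show False
    proof cases
      case 1
      have "((\<lambda>h. \<bar>h\<bar> powr (mu - 1)) \<longlongrightarrow> 0) (at 0)" using 1 by (intro powr_lim0) simp
      moreover have "((\<lambda>h. \<bar>h\<bar> powr (mu - 1)) \<longlongrightarrow> (A / 2) / (lam * (B / 2) powr mu)) (at 0)"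
        using Lim_transform_eventually[OF C eC] .
      ultimately have "0 = (A / 2) / (lam * (B / 2) powr mu)" by (rule tendsto_unique[OF at_neq_bot])
      then show False using Cne by simp
    next
      case 2
      have "((\<lambda>h. \<bar>h\<bar> powr (1 - mu)) \<longlongrightarrow> 0) (at 0)" using 2 by (intro powr_lim0) simp
      moreover have linv: "((\<lambda>h. inverse ((a h / 2) / (lam * (b h / 2) powr mu))) \<longlongrightarrow> inverse ((A / 2) / (lam * (B / 2) powr mu))) (at 0)"
        by (rule tendsto_inverse[OF C Cne])
      moreover have einv: "eventually (\<lambda>h. inverse ((a h / 2) / (lam * (b h / 2) powr mu)) = \<bar>h\<bar> powr (1 - mu)) (at 0)"
        using eC
      proof eventually_elim
        case (elim h)
        have "inverse ((a h / 2) / (lam * (b h / 2) powr mu)) = inverse (\<bar>h\<bar> powr (mu - 1))"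
          using elim by (rule arg_cong)
        also have "\<dots> = \<bar>h\<bar> powr (- (mu - 1))" by (rule powr_minus[symmetric])
        also have "- (mu - 1) = 1 - mu" by simp
        finally show ?case .
      qed
      ultimately have l3: "((\<lambda>h. \<bar>h\<bar> powr (1 - mu)) \<longlongrightarrow> inverse ((A / 2) / (lam * (B / 2) powr mu))) (at 0)"
        using Lim_transform_eventually[OF linv einv] by simp
      have "inverse ((A / 2) / (lam * (B / 2) powr mu)) = 0"
        by (rule tendsto_unique[OF at_neq_bot l3 \<open>((\<lambda>h. \<bar>h\<bar> powr (1 - mu)) \<longlongrightarrow> 0) (at 0)\<close>])
      then show False using Cne by simp
    qed
  qed
  have l4: "((\<lambda>h. a h / b h) \<longlongrightarrow> A / B) (at 0)" using B0 by (intro tendsto_intros la lb) auto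
  have e4: "eventually (\<lambda>h. a h / b h = lam) (at 0)"
    using key ev_ne0 by eventually_elim (simp add: mu1)
  have "A / B = lam"
  proof (rule tendsto_unique[OF at_neq_bot l4])
    have e4': "eventually (\<lambda>h. lam = a h / b h) (at 0)" by (rule eventually_mono[OF e4]) simp
    show "((\<lambda>h. a h / b h) \<longlongrightarrow> lam) (at 0)" by (rule Lim_transform_eventually[OF tendsto_const e4'])
  qed
  then have "lam = A / B" by simp
  then show ?thesis using mu1 by (simp add: A_def B_def)
qed

lemma lam_mu:
  assumes s0: "s0 \<in> I" and d: "\<delta> > 0"
    and H: "\<forall>h1 h2. \<bar>h1\<bar> < \<delta> \<and> \<bar>h2\<bar> < \<delta> \<and> s0 + h1 \<in> I \<and> s0 + h2 \<in> I \<and>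
       X s0 \<noteq> X (s0 + h1) \<and> X s0 \<noteq> X (s0 + h2) \<and> X (s0 + h1) \<noteq> X (s0 + h2) \<longrightarrow>
       U_area X s0 h1 h2 = lam * T_area X s0 h1 h2 powr mu"
  shows "mu = 1 \<and> lam = 1/2"
proof -
  have kn: "k s0 \<noteq> 0" using kne[OF s0] by (simp add: k_def)
  have ev: "eventually (\<lambda>h. mu = 1 \<and> lam = \<bar>k s0\<bar> * (bet s0 (s0 + h) / h)^2 / \<bar>Pf s0 (s0 + h) / h^2\<bar>) (at 0)"
    using ev_good[OF s0 d]
  proof eventually_elim
    case (elim h)
    have "mu = 1 \<and> lam = \<bar>k s0\<bar> * (bet s0 (s0 + h))^2 / \<bar>Pf s0 (s0 + h)\<bar>"
      using lam_mu_u[OF s0 _ _ _ _ _ _ H, of "s0 + h"] elim by simp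
    then show ?case using elim by (simp add: power_divide abs_divide)
  qed
  then have mu1: "mu = 1" using eventually_happens[of _ "at (0::real)"] by auto
  have l0: "((\<lambda>h. \<bar>k s0\<bar> * (bet s0 (s0 + h) / h)^2 / \<bar>Pf s0 (s0 + h) / h^2\<bar>) \<longlongrightarrow> \<bar>k s0\<bar> * (1/2)^2 / \<bar>k s0 / 2\<bar>) (at 0)"
    using kn by (intro tendsto_intros lim_bet[OF s0] lim_Pf2[OF s0]) simp
  have e5: "eventually (\<lambda>h. \<bar>k s0\<bar> * (bet s0 (s0 + h) / h)^2 / \<bar>Pf s0 (s0 + h) / h^2\<bar> = lam) (at 0)"
    using ev by eventually_elim simp
  have l6: "((\<lambda>h. lam) \<longlongrightarrow> \<bar>k s0\<bar> * (1/2)^2 / \<bar>k s0 / 2\<bar>) (at (0::real))"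
    using Lim_transform_eventually[OF l0 e5] by simp
  moreover have "\<bar>k s0\<bar> * (1/2)^2 / \<bar>k s0 / 2\<bar> = 1/2" using kn by (simp add: power2_eq_square)
  ultimately have "((\<lambda>h. lam) \<longlongrightarrow> 1/2) (at (0::real))" by metis
  then have "lam = 1/2" by (rule tendsto_unique[OF at_neq_bot tendsto_const])
  with mu1 show ?thesis by simp
qed

end


lemma deriv_zero_open:
  fixes f :: "real \<Rightarrow> real"
  assumes "open S" "x \<in> S" "\<And>y. y \<in> S \<Longrightarrow> f y = 0" "DERIV f x :> D"
  shows "D = 0"
proof -
  have "DERIV (\<lambda>y. 0::real) x :> 0" by (rule DERIV_const)
  then have "DERIV f x :> 0"
    by (rule has_field_derivative_transform_within_open[OF _ assms(1,2)]) (simp add: assms(3))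
  then show ?thesis using assms(4) DERIV_unique by blast
qed

context scurve begin

definition "btil s0 u = Qf s0 u - Pf s0 u * Q1 s0 u / P1 s0 u"
definition "bd s0 u = Q1 s0 u - ((P1 s0 u * Q1 s0 u + Q2 s0 u * Pf s0 u) * P1 s0 u - Pf s0 u * Q1 s0 u * P2 s0 u) / (P1 s0 u * P1 s0 u)"

lemma d_btil: "u \<in> I \<Longrightarrow> P1 s0 u \<noteq> 0 \<Longrightarrow> DERIV (btil s0) u :> bd s0 u"
  unfolding btil_def[abs_def] bd_def
  by (intro DERIV_diff DERIV_divide DERIV_mult dQf dPf dQ1 dP1)

lemma btil_bet: "s0 \<in> I \<Longrightarrow> P1 s0 u \<noteq> 0 \<Longrightarrow> btil s0 u = bet s0 u"
proof -
  assume s0: "s0 \<in> I" and p: "P1 s0 u \<noteq> 0"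
  have fr: "cross2 (X u - X s0) (X1 u) = Qf s0 u * P1 s0 u - Pf s0 u * Q1 s0 u"
    unfolding Qf_def Pf_def P1_def Q1_def by (rule frame[OF s0])
  have bt: "bet s0 u = cross2 (X u - X s0) (X1 u) / P1 s0 u" by (simp add: bet_def P1_def)
  show ?thesis unfolding btil_def bt fr using p by (simp add: field_simps)
qed

lemma side_const:
  assumes s0: "s0 \<in> I" and S: "open S" "convex S"
    and Srel: "\<And>u. u \<in> S \<Longrightarrow> u \<in> I \<and> P1 s0 u \<noteq> 0 \<and> Pf s0 u \<noteq> 0 \<and> 2 * k s0 * (bet s0 u)^2 = Pf s0 u"
  shows "\<exists>b. \<forall>u\<in>S. k s0 * (Qf s0 u + b * Pf s0 u)^2 = 2 * Pf s0 u"
proof -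
  have rel: "\<And>u. u \<in> S \<Longrightarrow> 2 * k s0 * (btil s0 u * btil s0 u) - Pf s0 u = 0"
    using Srel btil_bet[OF s0] by (simp add: power2_eq_square)
  have R': "\<And>u. u \<in> S \<Longrightarrow> 2 * k s0 * (bd s0 u * btil s0 u + bd s0 u * btil s0 u) - P1 s0 u = 0"
  proof -
    fix u assume u: "u \<in> S"
    have "DERIV (\<lambda>u. 2 * k s0 * (btil s0 u * btil s0 u) - Pf s0 u) u :>
          2 * k s0 * (bd s0 u * btil s0 u + bd s0 u * btil s0 u) - P1 s0 u"
      using Srel[OF u] by (intro DERIV_diff DERIV_cmult DERIV_mult d_btil dPf) auto
    then show "2 * k s0 * (bd s0 u * btil s0 u + bd s0 u * btil s0 u) - P1 s0 u = 0"
      by (rule deriv_zero_open[OF S(1) u rel, rotated]) 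
  qed
  define Qfun where "Qfun u = (2 * btil s0 u - Qf s0 u) / Pf s0 u" for u
  have dQ: "\<And>u. u \<in> S \<Longrightarrow> (Qfun has_field_derivative 0) (at u within S)"
  proof -
    fix u assume u: "u \<in> S"
    note su = Srel[OF u]
    have D: "DERIV Qfun u :> ((2 * bd s0 u - Q1 s0 u) * Pf s0 u - (2 * btil s0 u - Qf s0 u) * P1 s0 u) / (Pf s0 u * Pf s0 u)"
      unfolding Qfun_def[abs_def] using su
      by (intro DERIV_divide DERIV_diff DERIV_cmult d_btil dQf dPf) auto
    have e1: "Pf s0 u * Q1 s0 u = (Qf s0 u - btil s0 u) * P1 s0 u"
      using su by (simp add: btil_def field_simps)
    have e2: "Pf s0 u = 2 * k s0 * (btil s0 u * btil s0 u)" using rel[OF u] by simp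
    have e3: "P1 s0 u = 4 * k s0 * btil s0 u * bd s0 u" using R'[OF u] by (simp add: algebra_simps)
    have "(2 * bd s0 u - Q1 s0 u) * Pf s0 u - (2 * btil s0 u - Qf s0 u) * P1 s0 u =
          2 * bd s0 u * Pf s0 u - btil s0 u * P1 s0 u"
      using e1 by (simp add: algebra_simps)
    also have "\<dots> = 0" unfolding e3 by (subst e2) (simp add: algebra_simps)
    finally have "DERIV Qfun u :> 0" using D by simp
    then show "(Qfun has_field_derivative 0) (at u within S)" by (rule has_field_derivative_at_within)
  qed
  obtain b where b: "\<And>u. u \<in> S \<Longrightarrow> Qfun u = b"
    using has_field_derivative_zero_constant[OF S(2) dQ] by blast
  show ?thesis
  proof (intro exI ballI)
    fix u assume u: "u \<in> S"
    note su = Srel[OF u]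
    have "Qf s0 u + b * Pf s0 u = 2 * btil s0 u"
      using b[OF u] su unfolding Qfun_def by (simp add: field_simps)
    then show "k s0 * (Qf s0 u + b * Pf s0 u)^2 = 2 * Pf s0 u"
      using rel[OF u] by (simp add: power2_eq_square algebra_simps)
  qed
qed

end


context scurve begin

definition "Rb s0 b u = Qf s0 u + b * Pf s0 u"
definition "R1b s0 b u = Q1 s0 u + b * P1 s0 u"
definition "R2b s0 b u = Q2 s0 u + b * P2 s0 u"
definition "R3b s0 b u = Q3 s0 u + b * P3 s0 u"
definition "Gb s0 b u = k s0 * (Rb s0 b u * Rb s0 b u) - 2 * Pf s0 u"
definition "g1 s0 b u = k s0 * (R1b s0 b u * Rb s0 b u + R1b s0 b u * Rb s0 b u) - 2 * P1 s0 u"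
definition "g2 s0 b u = k s0 * ((R2b s0 b u * Rb s0 b u + R1b s0 b u * R1b s0 b u) +
                                 (R2b s0 b u * Rb s0 b u + R1b s0 b u * R1b s0 b u)) - 2 * P2 s0 u"
definition "g3 s0 b u = k s0 * (2 * (R3b s0 b u * Rb s0 b u) + 6 * (R1b s0 b u * R2b s0 b u)) - 2 * P3 s0 u"

lemma dR: "u \<in> I \<Longrightarrow> DERIV (Rb s0 b) u :> R1b s0 b u"
  unfolding Rb_def[abs_def] R1b_def by (intro DERIV_add DERIV_cmult dQf dPf)
lemma dR1: "u \<in> I \<Longrightarrow> DERIV (R1b s0 b) u :> R2b s0 b u"
  unfolding R1b_def[abs_def] R2b_def by (intro DERIV_add DERIV_cmult dQ1 dP1)
lemma dR2: "u \<in> I \<Longrightarrow> DERIV (R2b s0 b) u :> R3b s0 b u"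
  unfolding R2b_def[abs_def] R3b_def by (intro DERIV_add DERIV_cmult dQ2 dP2)

lemma dG: "u \<in> I \<Longrightarrow> DERIV (Gb s0 b) u :> g1 s0 b u"
  unfolding Gb_def[abs_def] g1_def by (intro DERIV_diff DERIV_cmult DERIV_mult dR dPf)
lemma dg1: "u \<in> I \<Longrightarrow> DERIV (g1 s0 b) u :> g2 s0 b u"
  unfolding g1_def[abs_def] g2_def by (intro DERIV_diff DERIV_cmult DERIV_mult DERIV_add dR dR1 dP1)
lemma dg2: "u \<in> I \<Longrightarrow> DERIV (g2 s0 b) u :> g3 s0 b u"
proof -
  assume u: "u \<in> I"
  have "DERIV (g2 s0 b) u :> k s0 * (((R3b s0 b u * Rb s0 b u + R1b s0 b u * R2b s0 b u) + (R2b s0 b u * R1b s0 b u + R2b s0 b u * R1b s0 b u)) +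
         ((R3b s0 b u * Rb s0 b u + R1b s0 b u * R2b s0 b u) + (R2b s0 b u * R1b s0 b u + R2b s0 b u * R1b s0 b u))) - 2 * P3 s0 u"
    unfolding g2_def[abs_def] using u by (intro DERIV_diff DERIV_cmult DERIV_mult DERIV_add dR dR1 dR2 dP2)
  then show ?thesis by (rule DERIV_cong) (simp add: g3_def algebra_simps)
qed

lemma isCont_g3: "s0 \<in> I \<Longrightarrow> isCont (g3 s0 b) s0"
proof -
  assume s0: "s0 \<in> I"
  have c1: "isCont (Qf s0) s0" "isCont (Pf s0) s0" "isCont (Q1 s0) s0" "isCont (P1 s0) s0"
     "isCont (Q2 s0) s0" "isCont (P2 s0) s0"
    using dQf[OF s0] dPf[OF s0] dQ1[OF s0] dP1[OF s0] dQ2[OF s0] dP2[OF s0] DERIV_isCont by blast+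
  have c3: "isCont (Q3 s0) s0" "isCont (P3 s0) s0"
    using contX3[OF s0] unfolding isCont_def Q3_def P3_def by (auto intro!: tendsto_intros)
  show ?thesis unfolding g3_def[abs_def] R3b_def[abs_def] Rb_def[abs_def] R1b_def[abs_def] R2b_def[abs_def]
    by (intro continuous_intros c1 c3)
qed

lemma g3_s0: "s0 \<in> I \<Longrightarrow> g3 s0 b s0 = 6 * k s0 * (Q2 s0 s0 + b * k s0) - 2 * P3 s0 s0"
  by (simp add: g3_def R1b_def R2b_def Rb_def Q10 P20 algebra_simps)

lemma side_g3:
  assumes s0: "s0 \<in> I" and S: "open S" "S \<subseteq> I" and G: "\<And>u. u \<in> S \<Longrightarrow> Gb s0 b u = 0"
    and F: "F \<noteq> bot" "F \<le> at s0" "eventually (\<lambda>u. u \<in> S) F"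
  shows "6 * k s0 * (Q2 s0 s0 + b * k s0) - 2 * P3 s0 s0 = 0"
proof -
  have z1: "\<And>u. u \<in> S \<Longrightarrow> g1 s0 b u = 0"
    using deriv_zero_open[OF S(1) _ G dG] S(2) by blast
  have z2: "\<And>u. u \<in> S \<Longrightarrow> g2 s0 b u = 0"
    using deriv_zero_open[OF S(1) _ z1 dg1] S(2) by blast
  have z3: "\<And>u. u \<in> S \<Longrightarrow> g3 s0 b u = 0"
    using deriv_zero_open[OF S(1) _ z2 dg2] S(2) by blast
  have l1: "(g3 s0 b \<longlongrightarrow> g3 s0 b s0) F"
    using tendsto_mono[OF F(2)] isCont_g3[OF s0] unfolding isCont_def by blast
  have ev: "eventually (\<lambda>u. 0 = g3 s0 b u) F" using F(3) by (rule eventually_mono) (simp add: z3)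
  have l2: "(g3 s0 b \<longlongrightarrow> 0) F"
    by (rule Lim_transform_eventually[OF tendsto_const ev])
  have "g3 s0 b s0 = 0" by (rule tendsto_unique[OF F(1) l1 l2])
  then show ?thesis using g3_s0[OF s0] by simp
qed

lemma local_parab:
  assumes s0: "s0 \<in> I" and d: "\<delta> > 0"
    and H: "\<forall>h1 h2. \<bar>h1\<bar> < \<delta> \<and> \<bar>h2\<bar> < \<delta> \<and> s0 + h1 \<in> I \<and> s0 + h2 \<in> I \<and>
       X s0 \<noteq> X (s0 + h1) \<and> X s0 \<noteq> X (s0 + h2) \<and> X (s0 + h1) \<noteq> X (s0 + h2) \<longrightarrow>
       U_area X s0 h1 h2 = T_area X s0 h1 h2 / 2"
  shows "\<exists>\<epsilon>>0. \<exists>b. \<forall>u. \<bar>u - s0\<bar> < \<epsilon> \<longrightarrow> u \<in> I \<and> k s0 * (Qf s0 u + b * Pf s0 u)^2 = 2 * Pf s0 u"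
proof -
  obtain \<epsilon> where e: "\<epsilon> > 0" and E: "\<And>u. 0 < \<bar>u - s0\<bar> \<and> \<bar>u - s0\<bar> < \<epsilon> \<Longrightarrow> u \<in> I \<and> P1 s0 u \<noteq> 0 \<and> Pf s0 u \<noteq> 0 \<and>
      bet s0 u \<noteq> 0 \<and> 2 * k s0 * (bet s0 u)^2 = Pf s0 u"
    using local_rel[OF s0 d H] by blast
  have ER: "\<And>u. u \<in> {s0<..<s0+\<epsilon>} \<Longrightarrow> u \<in> I \<and> P1 s0 u \<noteq> 0 \<and> Pf s0 u \<noteq> 0 \<and> 2 * k s0 * (bet s0 u)^2 = Pf s0 u"
    using E by auto
  have EL: "\<And>u. u \<in> {s0-\<epsilon><..<s0} \<Longrightarrow> u \<in> I \<and> P1 s0 u \<noteq> 0 \<and> Pf s0 u \<noteq> 0 \<and> 2 * k s0 * (bet s0 u)^2 = Pf s0 u"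
    using E by auto
  obtain b1 where b1: "\<forall>u\<in>{s0<..<s0+\<epsilon>}. k s0 * (Qf s0 u + b1 * Pf s0 u)^2 = 2 * Pf s0 u"
    using side_const[OF s0 open_greaterThanLessThan convex_real_interval(8) ER] by blast
  obtain b2 where b2: "\<forall>u\<in>{s0-\<epsilon><..<s0}. k s0 * (Qf s0 u + b2 * Pf s0 u)^2 = 2 * Pf s0 u"
    using side_const[OF s0 open_greaterThanLessThan convex_real_interval(8) EL] by blast
  have r1: "6 * k s0 * (Q2 s0 s0 + b1 * k s0) - 2 * P3 s0 s0 = 0"
  proof (rule side_g3[OF s0 open_greaterThanLessThan, of _ _ b1 "at_right s0"])
    show "{s0<..<s0 + \<epsilon>} \<subseteq> I" using ER by auto
    show "Gb s0 b1 u = 0" if "u \<in> {s0<..<s0 + \<epsilon>}" for u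
      using b1 that by (simp add: Gb_def Rb_def power2_eq_square)
    show "at_right s0 \<noteq> bot" by simp
    show "at_right s0 \<le> at s0" by (rule at_le) simp
    show "\<forall>\<^sub>F u in at_right s0. u \<in> {s0<..<s0 + \<epsilon>}" using e by (intro eventually_at_right_real) simp
  qed
  have r2: "6 * k s0 * (Q2 s0 s0 + b2 * k s0) - 2 * P3 s0 s0 = 0"
  proof (rule side_g3[OF s0 open_greaterThanLessThan, of _ _ b2 "at_left s0"])
    show "{s0 - \<epsilon><..<s0} \<subseteq> I" using EL by auto
    show "Gb s0 b2 u = 0" if "u \<in> {s0 - \<epsilon><..<s0}" for u
      using b2 that by (simp add: Gb_def Rb_def power2_eq_square)
    show "at_left s0 \<noteq> bot" by simp
    show "at_left s0 \<le> at s0" by (rule at_le) simp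
    show "\<forall>\<^sub>F u in at_left s0. u \<in> {s0 - \<epsilon><..<s0}" using e by (intro eventually_at_left_real) simp
  qed
  have kn: "k s0 \<noteq> 0" using kne[OF s0] by (simp add: k_def)
  have "6 * (k s0 * k s0) * (b1 - b2) = (6 * k s0 * (Q2 s0 s0 + b1 * k s0) - 2 * P3 s0 s0) - (6 * k s0 * (Q2 s0 s0 + b2 * k s0) - 2 * P3 s0 s0)"
    by (simp add: algebra_simps)
  then have "6 * (k s0 * k s0) * (b1 - b2) = 0" using r1 r2 by simp
  then have b12: "b1 = b2" using kn by simp
  show ?thesis
  proof (rule exI[of _ \<epsilon>], intro conjI[OF e] exI[of _ b1] allI impI)
    fix u assume u: "\<bar>u - s0\<bar> < \<epsilon>"
    consider "u = s0" | "u \<in> {s0<..<s0+\<epsilon>}" | "u \<in> {s0-\<epsilon><..<s0}" using u by fastforce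
    then show "u \<in> I \<and> k s0 * (Qf s0 u + b1 * Pf s0 u)^2 = 2 * Pf s0 u"
    proof cases
      case 1 then show ?thesis using s0 by simp
    next
      case 2 then show ?thesis using b1 ER by blast
    next
      case 3 then show ?thesis using b2 EL b12 by blast
    qed
  qed
qed

end


definition "parab a u c = range (\<lambda>t::real. a + of_real t * u + of_real (c * t\<^sup>2) * \<i> * u)"

lemma parabola_parab: "norm u = 1 \<Longrightarrow> c \<noteq> 0 \<Longrightarrow> parabola (parab a u c)"
  unfolding parabola_def parab_def by blast

lemma parabola_E: "parabola P \<Longrightarrow> \<exists>a u c. norm u = 1 \<and> c \<noteq> 0 \<and> P = parab a u c"
  unfolding parabola_def parab_def by blast

lemma parab_mem:
  assumes u: "norm u = 1"
  shows "z \<in> parab a u c \<longleftrightarrow> Im ((z - a) / u) = c * (Re ((z - a) / u))\<^sup>2"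
proof
  have u0: "u \<noteq> 0" using u by auto
  assume "z \<in> parab a u c"
  then obtain t where z: "z = a + of_real t * u + of_real (c * t\<^sup>2) * \<i> * u" unfolding parab_def by auto
  have "(z - a) / u = of_real t + of_real (c * t\<^sup>2) * \<i>" using u0 unfolding z by (simp add: field_simps)
  then show "Im ((z - a) / u) = c * (Re ((z - a) / u))\<^sup>2" by simp
next
  have u0: "u \<noteq> 0" using u by auto
  assume h: "Im ((z - a) / u) = c * (Re ((z - a) / u))\<^sup>2"
  define t where "t = Re ((z - a) / u)"
  have "(z - a) / u = of_real t + of_real (c * t\<^sup>2) * \<i>"
    using h unfolding t_def by (simp add: complex_eq_iff)
  then have "z = a + of_real t * u + of_real (c * t\<^sup>2) * \<i> * u" using u0 by (simp add: field_simps)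
  then show "z \<in> parab a u c" unfolding parab_def by blast
qed

lemma parab_param_eq:
  assumes u: "norm u = 1" and "z \<in> parab a u c"
  shows "z = a + of_real (Re ((z - a) / u)) * u + of_real (c * (Re ((z - a) / u))\<^sup>2) * \<i> * u"
proof -
  have u0: "u \<noteq> 0" using u by auto
  have h: "Im ((z - a) / u) = c * (Re ((z - a) / u))\<^sup>2" using parab_mem[OF u] assms(2) by blast
  define t where "t = Re ((z - a) / u)"
  have "(z - a) / u = of_real t + of_real (c * t\<^sup>2) * \<i>"
    using h unfolding t_def by (simp add: complex_eq_iff)
  then have "z = a + of_real t * u + of_real (c * t\<^sup>2) * \<i> * u" using u0 by (simp add: field_simps)
  then show ?thesis unfolding t_def .
qed

lemma local_to_parab:
  assumes d: "norm d = 1" and k: "k0 \<noteq> 0"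
  shows "\<exists>a u c. norm u = 1 \<and> c \<noteq> 0 \<and> (\<forall>z. k0 * (dotc d (z - A) + b * cross2 d (z - A))\<^sup>2 = 2 * cross2 d (z - A)
      \<longrightarrow> z \<in> parab a u c)"
proof -
  define r where "r = sqrt (1 + b\<^sup>2)"
  have r0: "r > 0" unfolding r_def by (simp add: add_pos_nonneg)
  have rr: "r * r = 1 + b\<^sup>2" unfolding r_def by (simp add: add_nonneg_nonneg)
  define u where "u = d * (1 + \<i> * of_real b) / of_real r"
  define c where "c = k0 * r * r * r / 2"
  define m where "m = b / (2 * c)"
  define a where "a = A + of_real m * u - of_real (c * m\<^sup>2) * \<i> * u"
  have c0: "c \<noteq> 0" using k r0 by (simp add: c_def)
  have d0: "d \<noteq> 0" using d by auto
  have nu: "norm u = 1"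
  proof -
    have "norm (1 + \<i> * of_real b) = r" unfolding r_def by (simp add: cmod_def power2_eq_square)
    then show ?thesis using d r0 by (simp add: u_def norm_mult norm_divide)
  qed
  show ?thesis
  proof (intro exI conjI allI impI)
    show "norm u = 1" by (rule nu)
    show "c \<noteq> 0" by (rule c0)
    fix z assume rel: "k0 * (dotc d (z - A) + b * cross2 d (z - A))\<^sup>2 = 2 * cross2 d (z - A)"
    define x where "x = dotc d (z - A)"
    define y where "y = cross2 d (z - A)"
    have dd: "(Re d)\<^sup>2 + (Im d)\<^sup>2 = 1" by (rule norm1_sq[OF d])
    have zA: "z - A = d * (of_real x + \<i> * of_real y)"
    proof -
      have "d * (of_real x + \<i> * of_real y) = ((Re d)\<^sup>2 + (Im d)\<^sup>2) * (z - A)"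
        by (simp add: x_def y_def dotc_def cross2_def complex_eq_iff power2_eq_square algebra_simps)
      then show ?thesis using dd by simp
    qed
    define \<tau> where "\<tau> = (x + b * y) / r"
    define t where "t = \<tau> - m"
    have rel': "k0 * (x + b * y)\<^sup>2 = 2 * y" using rel unfolding x_def y_def .
    have "c * \<tau>\<^sup>2 / r = k0 * (x + b * y)\<^sup>2 / 2"
      using r0 unfolding c_def \<tau>_def by (simp add: power2_eq_square field_simps)
    then have ry: "c * \<tau>\<^sup>2 / r = y" using rel' by simp
    have keyeq: "of_real x + \<i> * of_real y = (1 + \<i> * of_real b) * (of_real \<tau> + \<i> * of_real (c * \<tau>\<^sup>2 - b * \<tau>)) / of_real r"
    proof -
      have tr: "\<tau> * r = x + b * y" using r0 by (simp add: \<tau>_def)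
      have re: "x = \<tau> * r - b * (c * \<tau>\<^sup>2 / r)"
        unfolding ry tr by simp
      have "(1 + \<i> * of_real b) * (of_real \<tau> + \<i> * of_real (c * \<tau>\<^sup>2 - b * \<tau>)) / of_real r =
            of_real ((\<tau> * (1 + b\<^sup>2) - b * c * \<tau>\<^sup>2) / r) + \<i> * of_real (c * \<tau>\<^sup>2 / r)"
        using r0 by (simp add: complex_eq_iff power2_eq_square field_simps)
      also have "\<dots> = of_real x + \<i> * of_real y"
      proof -
        have e1: "(\<tau> * (1 + b\<^sup>2) - b * c * \<tau>\<^sup>2) / r = \<tau> * r - b * (c * \<tau>\<^sup>2 / r)"
          using r0 by (simp add: rr[symmetric] field_simps)
        then have e2: "(\<tau> * (1 + b\<^sup>2) - b * c * \<tau>\<^sup>2) / r = x" using re by simp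
        show ?thesis by (simp only: e2 ry)
      qed
      finally show ?thesis by simp
    qed
    have "z = a + of_real t * u + of_real (c * t\<^sup>2) * \<i> * u"
    proof -
      have m2: "2 * c * m = b" using c0 by (simp add: m_def)
      have "a + of_real t * u + of_real (c * t\<^sup>2) * \<i> * u =
            A + u * (of_real \<tau> + \<i> * of_real (c * \<tau>\<^sup>2 - b * \<tau>))"
        unfolding a_def t_def m2[symmetric] by (simp add: algebra_simps power2_eq_square)
      also have "\<dots> = A + d * (of_real x + \<i> * of_real y)"
        unfolding keyeq u_def by (simp add: field_simps)
      also have "\<dots> = z" using zA by (metis add.commute diff_add_cancel)
      finally show ?thesis by simp
    qed
    then show "z \<in> parab a u c" unfolding parab_def by blast
  qed
qed


lemma parab_subset:
  assumes u1: "norm u1 = 1" and u2: "norm u2 = 1" and S: "infinite S"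
    and S1: "S \<subseteq> parab a1 u1 c1" and S2: "S \<subseteq> parab a2 u2 c2"
  shows "parab a1 u1 c1 \<subseteq> parab a2 u2 c2"
proof -
  define g where "g t = a1 + of_real t * u1 + of_real (c1 * t\<^sup>2) * \<i> * u1" for t
  have u20: "u2 \<noteq> 0" using u2 by auto
  define D where "D = (a1 - a2) / u2"
  define W where "W = u1 / u2"
  have gq: "(g t - a2) / u2 = D + of_real t * W + of_real (c1 * t\<^sup>2) * \<i> * W" for t
    using u20 unfolding g_def D_def W_def by (simp add: field_simps)
  define pa where "pa = [:Im D, Im W, c1 * Re W:]"
  define pb where "pb = [:Re D, Re W, - (c1 * Im W):]"
  define p where "p = pa - smult c2 (pb * pb)"
  have pe: "poly p t = Im ((g t - a2) / u2) - c2 * (Re ((g t - a2) / u2))\<^sup>2" for t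
    unfolding gq p_def pa_def pb_def by (simp add: power2_eq_square algebra_simps)
  have rng: "parab a1 u1 c1 = range g" unfolding parab_def g_def by simp
  have "g ` (g -` S) = S \<inter> range g" by (rule image_vimage_eq)
  moreover have "S \<subseteq> range g" using S1 rng by simp
  then have "S \<inter> range g = S" by (rule Int_absorb2)
  ultimately have "S = g ` (g -` S)" by simp
  then have inf: "infinite (g -` S)" using S by (metis finite_imageI)
  have "g -` S \<subseteq> {t. poly p t = 0}"
  proof
    fix t assume "t \<in> g -` S"
    then have "g t \<in> parab a2 u2 c2" using S2 by auto
    then show "t \<in> {t. poly p t = 0}" using parab_mem[OF u2] pe by simp
  qed
  then have "infinite {t. poly p t = 0}" using inf finite_subset by blast
  then have p0: "p = 0" using poly_roots_finite by blast
  show ?thesis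
  proof
    fix z assume "z \<in> parab a1 u1 c1"
    then obtain t where z: "z = g t" using rng by auto
    have "poly p t = 0" using p0 by simp
    then show "z \<in> parab a2 u2 c2" unfolding z using parab_mem[OF u2] pe by simp
  qed
qed

lemma parab_eq:
  assumes u1: "norm u1 = 1" and u2: "norm u2 = 1" and S: "infinite S"
    and S1: "S \<subseteq> parab a1 u1 c1" and S2: "S \<subseteq> parab a2 u2 c2"
  shows "parab a1 u1 c1 = parab a2 u2 c2"
  using parab_subset[OF u1 u2 S S1 S2] parab_subset[OF u2 u1 S S2 S1] by blast

lemma open_arc:
  fixes X :: "real \<Rightarrow> complex"
  assumes u: "norm u = 1" and sub: "X ` I \<subseteq> parab a u c" and cX: "continuous_on I X"
    and inj: "inj_on X I" and oI: "open I"
  shows "openin (top_of_set (parab a u c)) (X ` I)"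
proof -
  define tau where "tau z = Re ((z - a) / u)" for z
  define g where "g t = a + of_real t * u + of_real (c * t\<^sup>2) * \<i> * u" for t
  have gt: "z \<in> parab a u c \<Longrightarrow> g (tau z) = z" for z
    using parab_param_eq[OF u] unfolding g_def tau_def by metis
  define f where "f s = tau (X s)" for s
  have ctau: "continuous (at z) tau" for z
  proof -
    have t1: "((\<lambda>w. (w - a) / u) \<longlongrightarrow> (z - a) / u) (at z)"
      using u by (intro tendsto_divide tendsto_diff tendsto_ident_at tendsto_const) auto
    have "((\<lambda>w. Re ((w - a) / u)) \<longlongrightarrow> Re ((z - a) / u)) (at z)" by (rule tendsto_Re[OF t1])
    then show ?thesis unfolding tau_def isCont_def by simp
  qed
  have cf: "continuous_on I f"
  proof -
    have "continuous_on (X ` I) tau" by (intro continuous_at_imp_continuous_on ballI ctau)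
    from continuous_on_compose[OF cX this] show ?thesis by (simp add: f_def o_def)
  qed
  have injf: "inj_on f I"
  proof (rule inj_onI)
    fix s s' assume s: "s \<in> I" "s' \<in> I" and e: "f s = f s'"
    have "X s = g (f s)" using gt sub s(1) unfolding f_def by auto
    also have "\<dots> = g (f s')" using e by simp
    also have "\<dots> = X s'" using gt sub s(2) unfolding f_def by auto
    finally show "s = s'" using inj s by (meson inj_onD)
  qed
  have of: "open (f ` I)" by (rule invariance_of_domain[OF cf oI injf])
  have eq: "X ` I = parab a u c \<inter> tau -` (f ` I)"
  proof
    show "X ` I \<subseteq> parab a u c \<inter> tau -` (f ` I)" using sub unfolding f_def by auto
    show "parab a u c \<inter> tau -` (f ` I) \<subseteq> X ` I"
    proof
      fix z assume z: "z \<in> parab a u c \<inter> tau -` (f ` I)"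
      then obtain s where s: "s \<in> I" "tau z = f s" by auto
      have "z = g (tau z)" using gt z by auto
      also have "\<dots> = g (f s)" using s by simp
      also have "\<dots> = X s" using gt sub s(1) unfolding f_def by auto
      finally show "z \<in> X ` I" using s by auto
    qed
  qed
  have "open (tau -` (f ` I))" by (rule continuous_open_vimage[OF of ctau])
  then show ?thesis unfolding openin_open eq by blast
qed


definition "gam a u c t = a + of_real t * u + of_real (c * t\<^sup>2) * \<i> * u"
definition "gd u c t = u + of_real (2 * c * t) * \<i> * u"

lemma cross2_rot: "norm u = 1 \<Longrightarrow> cross2 (u * z) (u * w) = cross2 z w"
proof -
  assume "norm u = 1"
  then have h: "(Re u)\<^sup>2 + (Im u)\<^sup>2 = 1" by (rule norm1_sq)
  have "cross2 (u * z) (u * w) = ((Re u)\<^sup>2 + (Im u)\<^sup>2) * cross2 z w"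
    by (simp add: cross2_def power2_eq_square algebra_simps)
  then show ?thesis using h by simp
qed

lemma tri_area_rot: "norm u = 1 \<Longrightarrow> tri_area (a + u * z0) (a + u * z1) (a + u * z2) = tri_area z0 z1 z2"
proof -
  assume u: "norm u = 1"
  have "(a + u * z1) - (a + u * z0) = u * (z1 - z0)" "(a + u * z2) - (a + u * z0) = u * (z2 - z0)"
    by (simp_all add: algebra_simps)
  then show ?thesis unfolding tri_area_def by (simp add: cross2_rot[OF u])
qed

lemma line_inter_scale:
  assumes "r \<noteq> 0" "r' \<noteq> 0"
  shows "line_inter P (of_real r * d) Q (of_real r' * e) = line_inter P d Q e"
proof -
  have a: "cross2 (Q - P) (of_real r' * e) = r' * cross2 (Q - P) e" by (rule cross2_scale_right)
  have b: "cross2 (of_real r * d) (of_real r' * e) = r' * (r * cross2 d e)"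
    by (simp only: cross2_scale_left cross2_scale_right)
  have c: "r' * cross2 (Q - P) e / (r' * (r * cross2 d e)) * r = cross2 (Q - P) e / cross2 d e"
    using assms by (cases "cross2 d e = 0") (simp_all add: field_simps)
  have "of_real (r' * cross2 (Q - P) e / (r' * (r * cross2 d e))) * (of_real r * d)
      = of_real (r' * cross2 (Q - P) e / (r' * (r * cross2 d e)) * r) * d"
    by (simp only: of_real_mult mult.assoc)
  then show ?thesis unfolding line_inter_def a b c by simp
qed

lemma gam_eq: "gam a u c t = a + u * (of_real t + \<i> * of_real (c * t\<^sup>2))"
  by (simp add: gam_def algebra_simps)
lemma gd_eq: "gd u c t = u * (1 + \<i> * of_real (2 * c * t))"
  by (simp add: gd_def algebra_simps)

lemma line_inter_par:
  assumes u: "norm u = 1" and c: "c \<noteq> 0" and t: "t1 \<noteq> t2"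
  shows "line_inter (gam a u c t1) (gd u c t1) (gam a u c t2) (gd u c t2) =
         a + u * (of_real ((t1 + t2) / 2) + \<i> * of_real (c * t1 * t2))"
proof -
  have e1: "gam a u c t2 - gam a u c t1 = u * ((of_real t2 + \<i> * of_real (c * t2\<^sup>2)) - (of_real t1 + \<i> * of_real (c * t1\<^sup>2)))"
    by (simp add: gam_eq algebra_simps)
  have n: "cross2 (gam a u c t2 - gam a u c t1) (gd u c t2) = c * (t2 - t1)\<^sup>2"
    unfolding e1 gd_eq cross2_rot[OF u] by (simp add: cross2_def power2_eq_square algebra_simps)
  have dn: "cross2 (gd u c t1) (gd u c t2) = 2 * c * (t2 - t1)"
    unfolding gd_eq cross2_rot[OF u] by (simp add: cross2_def algebra_simps)
  have r: "c * (t2 - t1)\<^sup>2 / (2 * c * (t2 - t1)) = (t2 - t1) / 2"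
    using c t by (simp add: power2_eq_square field_simps)
  show ?thesis unfolding line_inter_def n dn r
    by (simp add: gam_eq gd_eq complex_eq_iff power2_eq_square field_simps)
qed

lemma parab_UT:
  assumes u: "norm u = 1" and c: "c \<noteq> 0" and t: "t0 \<noteq> t1" "t0 \<noteq> t2" "t1 \<noteq> t2"
    and r: "r0 \<noteq> 0" "r1 \<noteq> 0" "r2 \<noteq> 0"
  shows "tri_area (line_inter (gam a u c t1) (of_real r1 * gd u c t1) (gam a u c t2) (of_real r2 * gd u c t2))
                  (line_inter (gam a u c t0) (of_real r0 * gd u c t0) (gam a u c t1) (of_real r1 * gd u c t1))
                  (line_inter (gam a u c t0) (of_real r0 * gd u c t0) (gam a u c t2) (of_real r2 * gd u c t2))
       = tri_area (gam a u c t0) (gam a u c t1) (gam a u c t2) / 2"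
proof -
  define m where "m x y = of_real ((x + y) / 2) + \<i> * of_real (c * x * y)" for x y
  define w where "w x = of_real x + \<i> * of_real (c * x\<^sup>2)" for x
  have L: "tri_area (line_inter (gam a u c t1) (of_real r1 * gd u c t1) (gam a u c t2) (of_real r2 * gd u c t2))
                  (line_inter (gam a u c t0) (of_real r0 * gd u c t0) (gam a u c t1) (of_real r1 * gd u c t1))
                  (line_inter (gam a u c t0) (of_real r0 * gd u c t0) (gam a u c t2) (of_real r2 * gd u c t2))
       = tri_area (m t1 t2) (m t0 t1) (m t0 t2)"
    unfolding line_inter_scale[OF r(2) r(3)] line_inter_scale[OF r(1) r(2)] line_inter_scale[OF r(1) r(3)]
      line_inter_par[OF u c t(3)] line_inter_par[OF u c t(1)] line_inter_par[OF u c t(2)]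
    unfolding m_def by (rule tri_area_rot[OF u])
  have R: "tri_area (gam a u c t0) (gam a u c t1) (gam a u c t2) = tri_area (w t0) (w t1) (w t2)"
    unfolding gam_eq w_def by (rule tri_area_rot[OF u])
  have c1: "cross2 (m t0 t1 - m t1 t2) (m t0 t2 - m t1 t2) = c * (t1 - t0) * (t2 - t0) * (t2 - t1) / 2"
    by (simp add: m_def cross2_def field_simps)
  have c2: "cross2 (w t1 - w t0) (w t2 - w t0) = c * (t1 - t0) * (t2 - t0) * (t2 - t1)"
    by (simp add: w_def cross2_def power2_eq_square algebra_simps)
  have "tri_area (m t1 t2) (m t0 t1) (m t0 t2) = tri_area (w t0) (w t1) (w t2) / 2"
    unfolding tri_area_def c1 c2 by simp
  then show ?thesis using L R by simp
qed


context scurve begin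

lemma loc_parab:
  assumes s0: "s0 \<in> I"
    and H: "\<exists>\<delta>>0. \<forall>h1 h2. \<bar>h1\<bar> < \<delta> \<and> \<bar>h2\<bar> < \<delta> \<and> s0 + h1 \<in> I \<and> s0 + h2 \<in> I \<and>
       X s0 \<noteq> X (s0 + h1) \<and> X s0 \<noteq> X (s0 + h2) \<and> X (s0 + h1) \<noteq> X (s0 + h2) \<longrightarrow>
       U_area X s0 h1 h2 = T_area X s0 h1 h2 / 2"
  shows "\<exists>e>0. \<exists>a u c. norm u = 1 \<and> c \<noteq> 0 \<and> (\<forall>v. \<bar>v - s0\<bar> < e \<longrightarrow> v \<in> I \<and> X v \<in> parab a u c)"
proof -
  obtain \<delta> where d: "\<delta> > 0" and H': "\<forall>h1 h2. \<bar>h1\<bar> < \<delta> \<and> \<bar>h2\<bar> < \<delta> \<and> s0 + h1 \<in> I \<and> s0 + h2 \<in> I \<and>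
       X s0 \<noteq> X (s0 + h1) \<and> X s0 \<noteq> X (s0 + h2) \<and> X (s0 + h1) \<noteq> X (s0 + h2) \<longrightarrow>
       U_area X s0 h1 h2 = T_area X s0 h1 h2 / 2" using H by blast
  obtain e b where e: "e > 0" and E: "\<forall>v. \<bar>v - s0\<bar> < e \<longrightarrow> v \<in> I \<and> k s0 * (Qf s0 v + b * Pf s0 v)^2 = 2 * Pf s0 v"
    using local_parab[OF s0 d H'] by blast
  have kn: "k s0 \<noteq> 0" using kne[OF s0] by (simp add: k_def)
  obtain a u c where u: "norm u = 1" and c: "c \<noteq> 0" and P: "\<forall>z. k s0 * (dotc (X1 s0) (z - X s0) + b * cross2 (X1 s0) (z - X s0))\<^sup>2 = 2 * cross2 (X1 s0) (z - X s0)
      \<longrightarrow> z \<in> parab a u c"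
    using local_to_parab[OF unit[OF s0] kn, of "X s0" b] by blast
  have "\<forall>v. \<bar>v - s0\<bar> < e \<longrightarrow> v \<in> I \<and> X v \<in> parab a u c"
    using P E unfolding Qf_def Pf_def by blast
  then show ?thesis using e u c by blast
qed

lemma overlap:
  assumes r: "r > 0" and u1: "norm u1 = 1" and u2: "norm u2 = 1"
    and W: "\<forall>w. \<bar>w - v\<bar> < r \<longrightarrow> w \<in> I \<and> X w \<in> parab a1 u1 c1 \<and> X w \<in> parab a2 u2 c2"
  shows "parab a1 u1 c1 = parab a2 u2 c2"
proof -
  have sub: "{v - r<..<v + r} \<subseteq> I" using W by (auto simp: abs_less_iff)
  have "inj_on X {v - r<..<v + r}" by (rule inj_on_subset[OF inj sub])
  moreover have "infinite {v - r<..<v + r}" using r by simp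
  ultimately have inf: "infinite (X ` {v - r<..<v + r})" using finite_imageD by blast
  show ?thesis
  proof (rule parab_eq[OF u1 u2 inf])
    show "X ` {v - r<..<v + r} \<subseteq> parab a1 u1 c1" using W by (auto simp: abs_less_iff)
    show "X ` {v - r<..<v + r} \<subseteq> parab a2 u2 c2" using W by (auto simp: abs_less_iff)
  qed
qed

lemma global_parab:
  assumes ne: "I \<noteq> {}"
    and H: "\<forall>s0\<in>I. \<exists>\<delta>>0. \<forall>h1 h2. \<bar>h1\<bar> < \<delta> \<and> \<bar>h2\<bar> < \<delta> \<and> s0 + h1 \<in> I \<and> s0 + h2 \<in> I \<and>
       X s0 \<noteq> X (s0 + h1) \<and> X s0 \<noteq> X (s0 + h2) \<and> X (s0 + h1) \<noteq> X (s0 + h2) \<longrightarrow>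
       U_area X s0 h1 h2 = T_area X s0 h1 h2 / 2"
  shows "\<exists>P. parabola P \<and> X ` I \<subseteq> P \<and> openin (top_of_set P) (X ` I)"
proof -
  have loc: "\<And>s. s \<in> I \<Longrightarrow> \<exists>e>0. \<exists>a u c. norm u = 1 \<and> c \<noteq> 0 \<and> (\<forall>v. \<bar>v - s\<bar> < e \<longrightarrow> v \<in> I \<and> X v \<in> parab a u c)"
    using loc_parab H by blast
  obtain s0 where s0: "s0 \<in> I" using ne by blast
  obtain e0 a0 u0 c0 where e0: "e0 > 0" and u0: "norm u0 = 1" and c0: "c0 \<noteq> 0"
    and E0: "\<forall>v. \<bar>v - s0\<bar> < e0 \<longrightarrow> v \<in> I \<and> X v \<in> parab a0 u0 c0"
    using loc[OF s0] by blast
  define P0 where "P0 = parab a0 u0 c0"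
  define G where "G = {s. \<exists>e>0. \<forall>v. \<bar>v - s\<bar> < e \<longrightarrow> v \<in> I \<and> X v \<in> P0}"
  define B where "B = {s. \<exists>e>0. \<exists>a u c. norm u = 1 \<and> parab a u c \<noteq> P0 \<and> (\<forall>v. \<bar>v - s\<bar> < e \<longrightarrow> v \<in> I \<and> X v \<in> parab a u c)}"
  have shrink: "\<bar>v - s\<bar> < e \<Longrightarrow> \<bar>w - v\<bar> < e - \<bar>v - s\<bar> \<Longrightarrow> \<bar>w - s\<bar> < e" for v s w e :: real
    by linarith
  have oG: "open G"
    unfolding open_dist
  proof (intro ballI)
    fix s assume "s \<in> G"
    then obtain e where e: "e > 0" "\<forall>v. \<bar>v - s\<bar> < e \<longrightarrow> v \<in> I \<and> X v \<in> P0" unfolding G_def by blast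
    show "\<exists>e>0. \<forall>y. dist y s < e \<longrightarrow> y \<in> G"
    proof (intro exI[of _ e] conjI allI impI e(1))
      fix v assume "dist v s < e"
      then have vs: "\<bar>v - s\<bar> < e" by (simp add: dist_real_def)
      have A: "\<forall>w. \<bar>w - v\<bar> < e - \<bar>v - s\<bar> \<longrightarrow> w \<in> I \<and> X w \<in> P0" using e(2) shrink[OF vs] by blast
      have "e - \<bar>v - s\<bar> > 0" using vs by simp
      then show "v \<in> G" unfolding G_def using A by blast
    qed
  qed
  have oB: "open B"
    unfolding open_dist
  proof (intro ballI)
    fix s assume "s \<in> B"
    then obtain e a u c where e: "e > 0" "norm u = 1" "parab a u c \<noteq> P0" "\<forall>v. \<bar>v - s\<bar> < e \<longrightarrow> v \<in> I \<and> X v \<in> parab a u c"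
      unfolding B_def by blast
    show "\<exists>e>0. \<forall>y. dist y s < e \<longrightarrow> y \<in> B"
    proof (intro exI[of _ e] conjI allI impI e(1))
      fix v assume "dist v s < e"
      then have vs: "\<bar>v - s\<bar> < e" by (simp add: dist_real_def)
      have A: "\<forall>w. \<bar>w - v\<bar> < e - \<bar>v - s\<bar> \<longrightarrow> w \<in> I \<and> X w \<in> parab a u c" using e(4) shrink[OF vs] by blast
      have "e - \<bar>v - s\<bar> > 0" using vs by simp
      then show "v \<in> B" unfolding B_def using A e(2,3) by blast
    qed
  qed
  have cover: "I \<subseteq> G \<union> B"
  proof
    fix s assume s: "s \<in> I"
    obtain e a u c where e: "e > 0" "norm u = 1" "c \<noteq> 0" "\<forall>v. \<bar>v - s\<bar> < e \<longrightarrow> v \<in> I \<and> X v \<in> parab a u c"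
      using loc[OF s] by blast
    show "s \<in> G \<union> B"
    proof (cases "parab a u c = P0")
      case True then show ?thesis using e unfolding G_def by auto
    next
      case False then show ?thesis using e unfolding B_def by blast
    qed
  qed
  have disj: "G \<inter> B \<inter> I = {}"
  proof (rule ccontr)
    assume "G \<inter> B \<inter> I \<noteq> {}"
    then obtain s where sG: "s \<in> G" and sB: "s \<in> B" by blast
    obtain e1 where e1: "e1 > 0" "\<forall>v. \<bar>v - s\<bar> < e1 \<longrightarrow> v \<in> I \<and> X v \<in> P0" using sG unfolding G_def by blast
    obtain e2 a u c where e2: "e2 > 0" "norm u = 1" "parab a u c \<noteq> P0" "\<forall>v. \<bar>v - s\<bar> < e2 \<longrightarrow> v \<in> I \<and> X v \<in> parab a u c"
      using sB unfolding B_def by blast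
    have "parab a0 u0 c0 = parab a u c"
      by (rule overlap[of "min e1 e2" u0 u s a0 c0 a c]) (use e1 e2 u0 in \<open>auto simp: P0_def\<close>)
    then show False using e2(3) by (simp add: P0_def)
  qed
  have "connected I" using intI by (simp add: is_interval_connected)
  from connectedD[OF this oG oB disj cover] have "G \<inter> I = {} \<or> B \<inter> I = {}" .
  moreover have "s0 \<in> G" unfolding G_def P0_def using e0 E0 by blast
  ultimately have "B \<inter> I = {}" using s0 by blast
  then have IG: "I \<subseteq> G" using cover by blast
  have sub: "X ` I \<subseteq> P0"
  proof
    fix z assume "z \<in> X ` I"
    then obtain s where s: "s \<in> I" "z = X s" by blast
    then obtain e where "e > 0" "\<forall>v. \<bar>v - s\<bar> < e \<longrightarrow> v \<in> I \<and> X v \<in> P0" using IG unfolding G_def by blast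
    then show "z \<in> P0" using s by force
  qed
  have cX: "continuous_on I X" by (intro continuous_at_imp_continuous_on ballI contX)
  show ?thesis
    using parabola_parab[OF u0 c0] sub open_arc[OF u0 sub[unfolded P0_def] cX inj openI]
    unfolding P0_def by blast
qed

end


context scurve begin
lemma dgam: "(gam a u c has_vector_derivative gd u c t) (at t)"
proof -
  define F where "F z = a + z * u + of_real c * z\<^sup>2 * \<i> * u" for z :: complex
  have "(F has_field_derivative (u + of_real c * (2 * of_real t) * \<i> * u)) (at (of_real t))"
    unfolding F_def by (auto intro!: derivative_eq_intros simp: power2_eq_square)
  then have "((\<lambda>x. F (of_real x)) has_vector_derivative (u + of_real c * (2 * of_real t) * \<i> * u)) (at t)"
    by (rule has_vector_derivative_real_field)
  moreover have "(\<lambda>x. F (of_real x)) = gam a u c" by (auto simp: F_def gam_def fun_eq_iff)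
  moreover have "u + of_real c * (2 * of_real t) * \<i> * u = gd u c t" by (simp add: gd_def algebra_simps)
  ultimately show ?thesis by simp
qed

lemma curve_on_parab:
  assumes u: "norm u = 1" and c: "c \<noteq> 0" and sub: "X ` I \<subseteq> parab a u c"
    and s: "s \<in> I" "s + h1 \<in> I" "s + h2 \<in> I"
    and ne: "X s \<noteq> X (s + h1)" "X s \<noteq> X (s + h2)" "X (s + h1) \<noteq> X (s + h2)"
  shows "U_area X s h1 h2 = T_area X s h1 h2 / 2"
proof -
  define \<phi> where "\<phi> t = Re ((X t - a) / u)" for t
  have gX: "t \<in> I \<Longrightarrow> X t = gam a u c (\<phi> t)" for t
  proof -
    assume "t \<in> I"
    then have "X t \<in> parab a u c" using sub by blast
    from parab_param_eq[OF u this] show ?thesis unfolding gam_def \<phi>_def .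
  qed
  have X1eq: "t \<in> I \<Longrightarrow> X1 t = of_real (Re (X1 t / u)) * gd u c (\<phi> t) \<and> Re (X1 t / u) \<noteq> 0" for t
  proof -
    assume t: "t \<in> I"
    have "((\<lambda>t. X t - a) has_vector_derivative X1 t) (at t)"
      using D1[OF t] by (simp add: has_vector_derivative_diff_const)
    then have "((\<lambda>t. (X t - a) / u) has_vector_derivative X1 t / u) (at t)"
      by (rule bounded_linear.has_vector_derivative[OF bounded_linear_divide])
    then have "(\<phi> has_real_derivative Re (X1 t / u)) (at t)" unfolding \<phi>_def by (rule vd_Re)
    then have d\<phi>: "(\<phi> has_vector_derivative Re (X1 t / u)) (at t)"
      by (simp add: has_real_derivative_iff_has_vector_derivative)
    have "((gam a u c \<circ> \<phi>) has_vector_derivative (Re (X1 t / u) *\<^sub>R gd u c (\<phi> t))) (at t)"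
      by (rule vector_diff_chain_at[OF d\<phi> dgam])
    then have "(X has_vector_derivative (Re (X1 t / u) *\<^sub>R gd u c (\<phi> t))) (at t)"
      by (rule has_vector_derivative_transform_within_open[OF _ openI t]) (simp add: gX)
    then have "X1 t = Re (X1 t / u) *\<^sub>R gd u c (\<phi> t)"
      by (rule vector_derivative_unique_at[OF D1[OF t]])
    then have e0: "X1 t = of_real (Re (X1 t / u)) * gd u c (\<phi> t)"
      unfolding scaleR_conv_of_real .
    define r where "r = Re (X1 t / u)"
    have e: "X1 t = of_real r * gd u c (\<phi> t)" using e0 unfolding r_def .
    moreover have "r \<noteq> 0"
    proof
      assume "r = 0"
      then have "X1 t = 0" using e by simp
      then show False using unit[OF t] by simp
    qed
    ultimately show ?thesis unfolding r_def by blast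
  qed
  have dist: "\<phi> s \<noteq> \<phi> (s + h1)" "\<phi> s \<noteq> \<phi> (s + h2)" "\<phi> (s + h1) \<noteq> \<phi> (s + h2)"
  proof -
    show "\<phi> s \<noteq> \<phi> (s + h1)" using ne(1) gX[OF s(1)] gX[OF s(2)] by metis
    show "\<phi> s \<noteq> \<phi> (s + h2)" using ne(2) gX[OF s(1)] gX[OF s(3)] by metis
    show "\<phi> (s + h1) \<noteq> \<phi> (s + h2)" using ne(3) gX[OF s(2)] gX[OF s(3)] by metis
  qed
  define t0 where "t0 = \<phi> s"
  define t1 where "t1 = \<phi> (s + h1)"
  define t2 where "t2 = \<phi> (s + h2)"
  define r0 where "r0 = Re (X1 s / u)"
  define r1 where "r1 = Re (X1 (s + h1) / u)"
  define r2 where "r2 = Re (X1 (s + h2) / u)"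
  have x0: "X1 s = of_real r0 * gd u c t0" and n0: "r0 \<noteq> 0" using X1eq[OF s(1)] unfolding r0_def t0_def by auto
  have x1: "X1 (s + h1) = of_real r1 * gd u c t1" and n1: "r1 \<noteq> 0" using X1eq[OF s(2)] unfolding r1_def t1_def by auto
  have x2: "X1 (s + h2) = of_real r2 * gd u c t2" and n2: "r2 \<noteq> 0" using X1eq[OF s(3)] unfolding r2_def t2_def by auto
  have g0: "X s = gam a u c t0" and g1: "X (s + h1) = gam a u c t1" and g2: "X (s + h2) = gam a u c t2"
    using gX s unfolding t0_def t1_def t2_def by auto
  have dist': "t0 \<noteq> t1" "t0 \<noteq> t2" "t1 \<noteq> t2" using dist unfolding t0_def t1_def t2_def by auto
  show ?thesis
    unfolding U_area_def T_area_def Let_def vdX[OF s(1)] vdX[OF s(2)] vdX[OF s(3)] x0 x1 x2 g0 g1 g2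
    by (rule parab_UT[OF u c dist' n0 n1 n2])
qed

end


theorem corollary8:
  fixes X :: "real \<Rightarrow> complex" and I :: "real set"
  assumes "strictly_convex_curve I X" and "arclength_param I X"
  shows "((\<exists>lam mu :: real \<Rightarrow> real. small_prop I X
              (\<lambda>s h1 h2. U_area X s h1 h2 = lam s * T_area X s h1 h2 powr mu s))
          \<longleftrightarrow> small_prop I X (\<lambda>s h1 h2. U_area X s h1 h2 = T_area X s h1 h2 / 2))
       \<and> (small_prop I X (\<lambda>s h1 h2. U_area X s h1 h2 = T_area X s h1 h2 / 2)
          \<longleftrightarrow> (\<exists>P. parabola P \<and> X ` I \<subseteq> P \<and> openin (top_of_set P) (X ` I)))"
proof -
  from assms(1) have oi: "open_interval I" and C3: "C3_on I X" and inj: "inj_on X I"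
    and cv: "\<forall>t\<in>I. let d1 = vector_derivative X (at t);
                 d2 = vector_derivative (\<lambda>u. vector_derivative X (at u)) (at t) in
        d1 \<noteq> 0 \<and>
        (((\<forall>u\<in>I. cross2 d1 (X u - X t) \<ge> 0) \<and> cross2 d1 d2 > 0) \<or>
         ((\<forall>u\<in>I. cross2 d1 (X u - X t) \<le> 0) \<and> cross2 d1 d2 < 0))"
    unfolding strictly_convex_curve_def by auto
  from C3 obtain X1 X2 X3 where D1: "\<forall>t\<in>I. (X has_vector_derivative X1 t) (at t)"
    and D2: "\<forall>t\<in>I. (X1 has_vector_derivative X2 t) (at t)"
    and D3: "\<forall>t\<in>I. (X2 has_vector_derivative X3 t) (at t)"
    and C: "continuous_on I X3" unfolding C3_on_def by blast
  have oI: "open I" and intI: "is_interval I" and ne: "I \<noteq> {}" using oi unfolding open_interval_def by auto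
  have vd1: "t \<in> I \<Longrightarrow> vector_derivative X (at t) = X1 t" for t
    using D1 vector_derivative_at by blast
  have vd2: "t \<in> I \<Longrightarrow> vector_derivative (\<lambda>u. vector_derivative X (at u)) (at t) = X2 t" for t
  proof -
    assume t: "t \<in> I"
    have "((\<lambda>u. vector_derivative X (at u)) has_vector_derivative X2 t) (at t)"
      by (rule has_vector_derivative_transform_within_open[OF _ oI t]) (use D2 t vd1 in auto)
    then show ?thesis by (rule vector_derivative_at)
  qed
  have unit: "t \<in> I \<Longrightarrow> norm (X1 t) = 1" for t
    using assms(2) vd1 unfolding arclength_param_def by auto
  have cvx: "t \<in> I \<Longrightarrow> ((\<forall>u\<in>I. cross2 (X1 t) (X u - X t) \<ge> 0) \<and> cross2 (X1 t) (X2 t) > 0) \<or>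
         ((\<forall>u\<in>I. cross2 (X1 t) (X u - X t) \<le> 0) \<and> cross2 (X1 t) (X2 t) < 0)" for t
    using cv vd1 vd2 by (auto simp: Let_def)
  have conv: "t \<in> I \<Longrightarrow> u \<in> I \<Longrightarrow> cross2 (X1 t) (X u - X t) * cross2 (X1 t) (X2 t) \<ge> 0" for t u
    using cvx[of t] by (auto intro: mult_nonneg_nonneg mult_nonpos_nonpos)
  have kne: "t \<in> I \<Longrightarrow> cross2 (X1 t) (X2 t) \<noteq> 0" for t
    using cvx[of t] by auto
  interpret sc: scurve I X X1 X2 X3
    by unfold_locales (use oI intI D1 D2 D3 C unit inj conv kne in auto)
  have Tnn: "T_area X s h1 h2 \<ge> 0" for s h1 h2 by (simp add: T_area_def tri_area_def)
  have p1: "(\<exists>lam mu :: real \<Rightarrow> real. small_prop I X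
              (\<lambda>s h1 h2. U_area X s h1 h2 = lam s * T_area X s h1 h2 powr mu s))
          \<longleftrightarrow> small_prop I X (\<lambda>s h1 h2. U_area X s h1 h2 = T_area X s h1 h2 / 2)"
  proof
    assume "\<exists>lam mu :: real \<Rightarrow> real. small_prop I X
              (\<lambda>s h1 h2. U_area X s h1 h2 = lam s * T_area X s h1 h2 powr mu s)"
    then obtain lam mu :: "real \<Rightarrow> real" where L: "small_prop I X
              (\<lambda>s h1 h2. U_area X s h1 h2 = lam s * T_area X s h1 h2 powr mu s)" by blast
    show "small_prop I X (\<lambda>s h1 h2. U_area X s h1 h2 = T_area X s h1 h2 / 2)"
      unfolding small_prop_def
    proof
      fix s assume s: "s \<in> I"
      obtain \<delta> where d: "\<delta> > 0" and H: "\<forall>h1 h2. \<bar>h1\<bar> < \<delta> \<and> \<bar>h2\<bar> < \<delta> \<and> s + h1 \<in> I \<and> s + h2 \<in> I \<and>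
        X s \<noteq> X (s + h1) \<and> X s \<noteq> X (s + h2) \<and> X (s + h1) \<noteq> X (s + h2) \<longrightarrow>
        U_area X s h1 h2 = lam s * T_area X s h1 h2 powr mu s"
        using L s unfolding small_prop_def by blast
      have lm: "mu s = 1 \<and> lam s = 1/2" by (rule sc.lam_mu[OF s d H])
      show "\<exists>\<delta>>0. \<forall>h1 h2. \<bar>h1\<bar> < \<delta> \<and> \<bar>h2\<bar> < \<delta> \<and> s + h1 \<in> I \<and> s + h2 \<in> I \<and>
        X s \<noteq> X (s + h1) \<and> X s \<noteq> X (s + h2) \<and> X (s + h1) \<noteq> X (s + h2) \<longrightarrow>
        U_area X s h1 h2 = T_area X s h1 h2 / 2"
        using d H lm powr_one[OF Tnn] by (intro exI[of _ \<delta>]) auto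
    qed
  next
    assume H: "small_prop I X (\<lambda>s h1 h2. U_area X s h1 h2 = T_area X s h1 h2 / 2)"
    have "small_prop I X (\<lambda>s h1 h2. U_area X s h1 h2 = (\<lambda>_. 1/2) s * T_area X s h1 h2 powr (\<lambda>_. 1) s)"
      using H unfolding small_prop_def by (simp add: abs_of_nonneg[OF Tnn])
    then show "\<exists>lam mu :: real \<Rightarrow> real. small_prop I X
              (\<lambda>s h1 h2. U_area X s h1 h2 = lam s * T_area X s h1 h2 powr mu s)"
      by (intro exI[of _ "\<lambda>_::real. 1/2"] exI[of _ "\<lambda>_::real. 1::real"]) simp
  qed
  have p2: "small_prop I X (\<lambda>s h1 h2. U_area X s h1 h2 = T_area X s h1 h2 / 2)
          \<longleftrightarrow> (\<exists>P. parabola P \<and> X ` I \<subseteq> P \<and> openin (top_of_set P) (X ` I))"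
  proof
    assume H: "small_prop I X (\<lambda>s h1 h2. U_area X s h1 h2 = T_area X s h1 h2 / 2)"
    show "\<exists>P. parabola P \<and> X ` I \<subseteq> P \<and> openin (top_of_set P) (X ` I)"
      by (rule sc.global_parab[OF ne]) (use H in \<open>simp add: small_prop_def\<close>)
  next
    assume "\<exists>P. parabola P \<and> X ` I \<subseteq> P \<and> openin (top_of_set P) (X ` I)"
    then obtain P where P: "parabola P" "X ` I \<subseteq> P" by blast
    then obtain a u c where u: "norm u = 1" and c: "c \<noteq> 0" and Pe: "P = parab a u c"
      using parabola_E by blast
    have sub: "X ` I \<subseteq> parab a u c" using P Pe by simp
    show "small_prop I X (\<lambda>s h1 h2. U_area X s h1 h2 = T_area X s h1 h2 / 2)"
      unfolding small_prop_def
      using sc.curve_on_parab[OF u c sub] by (intro ballI exI[of _ 1]) auto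
  qed
  show ?thesis using p1 p2 by blast
qed


end
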